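(* Let $C$ be an unoriented resolution configuration with starting circles $\{x_i\}$ and ending circles $\{y_j\}$, and let $F_C:V_0(C)\to V_1(C)$ be an associated map satisfying the filtration rule and the naturality rule. Define $F_{m(C^* )}:V_0(m(C^* ))\to V_1(m(C^* ))$ on the mirror of the dual configuration by the duality rule, i.e. for monomials $a\in V_0(C)$, $b\in V_1(C)$ the coefficient of $a^*$ in $F_{m(C^* )}(b^* )$ is the coefficient of $b$ in $F_C(a)$. If $C$ is self-dual, i.e. there is an orientation-preserving diffeomorphism $\psi$ of $S^2$ carrying $C$ to $m(C^* )$, let $F'_C=\psi^{-1}\circ F_{m(C^* )}\circ\psi:V_0(C)\to V_1(C)$ (using the identifications induced by $\psi$), and replace $F_C$ by $\tilde F_C$, where $\tilde F_C=F_C+F'_C$ if $F_C\neq F'_C$ and $\tilde F_C=F_C$ otherwise. Then the resulting maps ($F_C$ together with $F_{m(C^* )}$ when $C\neq m(C^* )$, or $\tilde F_C$ when $C=m(C^* )$) satisfy the filtration rule, the duality rule and the naturality rule.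
   Context: A $k$-dimensional resolution configuration $C$ is a finite set of pairwise disjoint embedded circles $x_1,\dots,x_t$ in $S^2$ together with $k$ embedded arcs which are pairwise disjoint, whose endpoints lie on the circles and whose interiors are disjoint from the circles; unoriented means the arcs carry no orientation. The $x_i$ are the starting circles; the ending circles $y_1,\dots,y_s$ are obtained by surgery along all arcs. The dual configuration $C^*$ consists of the ending circles with the dual arcs obtained by rotating each arc $90$ degrees counterclockwise. Writing $S^2=\mathbb{R}^2\cup\{\infty\}$, the mirror $m(C)$ is the reflection of $C$ in $\mathbb{R}\times\{0\}$. There are canonical identifications $V_0(m(C^* ))=V_1(C)$ and $V_1(m(C^* ))=V_0(C)$, where $V_0(C)=\bigotimes_i\mathbb{F}_2[x_i]/(x_i^2)$ and $V_1(C)=\bigotimes_j\mathbb{F}_2[y_j]/(y_j^2)$, with bases of monomials. For a monomial $a$, $a^*$ is obtained by applying $1\mapsto z$, $z\mapsto 1$ in each tensor factor $\mathbb{F}_2[z]/(z^2)$. Rules: (Naturality) if an orientation-preserving diffeomorphism of $S^2$ sends $C$ to $C'$, then $F_C=F_{C'}$ under the induced identifications of $V_0$ and $V_1$. (Duality) for all monomials $a\in V_0(C)$, $b\in V_1(C)$ the coefficient of $b$ in $F_C(a)$ equals the coefficient of $a^*$ in $F_{m(C^* )}(b^* )$. (Filtration) for a point $P$ on the starting circles, let $x(P)$, $y(P)$ be the starting and ending circles containing $P$; if a monomial $a$ is divisible by $x(P)$ and the coefficient of a monomial $b$ in $F_C(a)$ is non-zero, then $b$ is divisible by $y(P)$.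 *)

theory Defs
  imports "HOL-Homology.Homology"
begin

type_synonym pt = "nat \<Rightarrow> real"

definition S2 :: "pt set" where
  "S2 = topspace (nsphere 2)"

text \<open>The model square for a thickened arc (band). For a band b, the arc is
  t |-> b(t,0) with endpoints b(-1,0), b(1,0); the band meets the circles exactly in
  b({-1,1} x [-1,1]).\<close>
definition sq :: "(real \<times> real) set" where
  "sq = {-1..1} \<times> {-1..1}"

record rconf =
  circles :: "pt set set"
  bands   :: "(real \<times> real \<Rightarrow> pt) set"

definition is_circle :: "pt set \<Rightarrow> bool" where
  "is_circle c \<longleftrightarrow> c \<subseteq> S2 \<and> subtopology (nsphere 2) c homeomorphic_space nsphere 1"

definition is_band :: "(real \<times> real \<Rightarrow> pt) \<Rightarrow> bool" where
  "is_band b \<longleftrightarrow> continuous_map (top_of_set sq) (nsphere 2) b \<and> inj_on b sq"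

text \<open>An (unoriented) resolution configuration, each arc given together with a thickening.\<close>
definition valid_conf :: "rconf \<Rightarrow> bool" where
  "valid_conf C \<longleftrightarrow>
     finite (circles C) \<and> (\<forall>c\<in>circles C. is_circle c) \<and> pairwise disjnt (circles C) \<and>
     finite (bands C) \<and>
     (\<forall>b\<in>bands C. is_band b \<and> {z \<in> sq. b z \<in> \<Union>(circles C)} = {-1,1} \<times> {-1..1}) \<and>
     (\<forall>b\<in>bands C. \<forall>b'\<in>bands C. b \<noteq> b' \<longrightarrow> disjnt (b ` sq) (b' ` sq))"

definition surg :: "rconf \<Rightarrow> pt set" where
  "surg C = (\<Union>(circles C) - (\<Union>b\<in>bands C. b ` ({-1,1} \<times> {-1<..<1})))
            \<union> (\<Union>b\<in>bands C. b ` ({-1..1} \<times> {-1,1}))"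

definition ending :: "rconf \<Rightarrow> pt set set" where
  "ending C = connected_components_of (subtopology (nsphere 2) (surg C))"

text \<open>Dual configuration: ending circles with the dual arcs (cocores of the bands).\<close>
definition dual :: "rconf \<Rightarrow> rconf" where
  "dual C = \<lparr> circles = ending C, bands = (\<lambda>b. b \<circ> prod.swap) ` bands C \<rparr>"

text \<open>Reflection; corresponds to reflection of R^2 in R x {0} under stereographic projection.\<close>
definition mir :: "pt \<Rightarrow> pt" where
  "mir p = (\<lambda>i. if i = 1 then - p i else p i)"

definition mirror :: "rconf \<Rightarrow> rconf" where
  "mirror C = \<lparr> circles = (\<lambda>c. mir ` c) ` circles C, bands = (\<lambda>b. mir \<circ> b) ` bands C \<rparr>"

definition md :: "rconf \<Rightarrow> rconf" where
  "md C = mirror (dual C)"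

definition oph :: "(pt \<Rightarrow> pt) \<Rightarrow> bool" where
  "oph f \<longleftrightarrow> homeomorphic_map (nsphere 2) (nsphere 2) f \<and> Brouwer_degree2 2 f = 1"

definition img :: "(pt \<Rightarrow> pt) \<Rightarrow> pt set set \<Rightarrow> pt set set" where
  "img f S = (\<lambda>c. f ` c) ` S"

definition sends :: "(pt \<Rightarrow> pt) \<Rightarrow> rconf \<Rightarrow> rconf \<Rightarrow> bool" where
  "sends f C C' \<longleftrightarrow> img f (circles C) = circles C' \<and>
     (\<lambda>b. f ` (b ` sq)) ` bands C = (\<lambda>b. b ` sq) ` bands C'"

text \<open>A map V_0(C) -> V_1(C) over F_2 is given by its matrix of coefficients on monomials:
  F A B = coefficient of the monomial prod B (B a set of ending circles) in F(prod A)
  (A a set of starting circles); F_2 is represented by bool (addition = xor).\<close>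
type_synonym coef = "pt set set \<Rightarrow> pt set set \<Rightarrow> bool"

definition filtration :: "rconf \<Rightarrow> coef \<Rightarrow> bool" where
  "filtration C F \<longleftrightarrow>
     (\<forall>P A B. P \<in> \<Union>(circles C) \<longrightarrow> P \<in> \<Union>(ending C) \<longrightarrow> A \<subseteq> circles C \<longrightarrow> B \<subseteq> ending C \<longrightarrow>
        F A B \<longrightarrow> (\<forall>x\<in>A. P \<in> x \<longrightarrow> (\<forall>y\<in>ending C. P \<in> y \<longrightarrow> y \<in> B)))"

text \<open>Duality between F = F_C and G = F_{m(C*)}; identifications V_0(m(C*)) = V_1(C),
  V_1(m(C*)) = V_0(C) via the reflection; a* = complementary monomial.\<close>
definition duality :: "rconf \<Rightarrow> coef \<Rightarrow> coef \<Rightarrow> bool" where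
  "duality C F G \<longleftrightarrow>
     (\<forall>A B. A \<subseteq> circles C \<longrightarrow> B \<subseteq> ending C \<longrightarrow>
        F A B = G (img mir (ending C - B)) (img mir (circles C - A)))"

definition natural :: "(pt \<Rightarrow> pt) \<Rightarrow> rconf \<Rightarrow> coef \<Rightarrow> coef \<Rightarrow> bool" where
  "natural f C F F' \<longleftrightarrow>
     (\<forall>A B. A \<subseteq> circles C \<longrightarrow> B \<subseteq> ending C \<longrightarrow> F' (img f A) (img f B) = F A B)"

definition rules :: "rconf set \<Rightarrow> (rconf \<Rightarrow> coef) \<Rightarrow> bool" where
  "rules K Fam \<longleftrightarrow>
     (\<forall>D\<in>K. filtration D (Fam D)) \<and>
     (\<forall>D\<in>K. md D \<in> K \<longrightarrow> duality D (Fam D) (Fam (md D))) \<and>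
     (\<forall>D\<in>K. \<forall>D'\<in>K. \<forall>f. oph f \<longrightarrow> sends f D D' \<longrightarrow> natural f D (Fam D) (Fam D'))"

text \<open>F_{m(C*)} defined from F_C by the duality rule.\<close>
definition dualmap :: "rconf \<Rightarrow> coef \<Rightarrow> coef" where
  "dualmap C F = (\<lambda>A' B'. F (circles C - img mir B') (ending C - img mir A'))"

definition transport :: "(pt \<Rightarrow> pt) \<Rightarrow> coef \<Rightarrow> coef" where
  "transport f G = (\<lambda>A B. G (img f A) (img f B))"

definition Fprime :: "rconf \<Rightarrow> coef \<Rightarrow> (pt \<Rightarrow> pt) \<Rightarrow> coef" where
  "Fprime C F psi = transport psi (dualmap C F)"

definition Ftilde :: "rconf \<Rightarrow> coef \<Rightarrow> (pt \<Rightarrow> pt) \<Rightarrow> coef" where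
  "Ftilde C F psi =
     (if \<exists>A B. A \<subseteq> circles C \<and> B \<subseteq> ending C \<and> F A B \<noteq> Fprime C F psi A B
      then (\<lambda>A B. F A B \<noteq> Fprime C F psi A B) else F)"

end

theory Submission
  imports Defs "HOL-Analysis.Abstract_Topological_Spaces"
begin

lemma X_eq: "nsphere 2 = top_of_set S2"
  by (simp add: S2_def nsphere euclidean_product_topology)

lemma homeo_S2:
  assumes "homeomorphic_map (nsphere 2) (nsphere 2) f"
  shows "f ` S2 = S2" "inj_on f S2" "continuous_on S2 f"
    "homeomorphic_map (nsphere 2) (nsphere 2) (inv_into S2 f)"
    "continuous_on S2 (inv_into S2 f)"
proof -
  have h: "homeomorphic_map (top_of_set S2) (top_of_set S2) f" using assms X_eq by simp
  have e: "continuous_map (top_of_set S2) (top_of_set S2) f \<and> f ` S2 = S2 \<and> inj_on f S2"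
    using h unfolding homeomorphic_eq_everything_map by simp
  then show "f ` S2 = S2" "inj_on f S2" by auto
  from e show "continuous_on S2 f"
    using continuous_map_subtopology_eu by blast
  obtain g where g: "homeomorphic_maps (top_of_set S2) (top_of_set S2) f g"
    using h homeomorphic_map_maps by blast
  then have g2: "homeomorphic_map (top_of_set S2) (top_of_set S2) g"
    and gi: "\<forall>y\<in>S2. f (g y) = y" "\<forall>x\<in>S2. g (f x) = x"
    unfolding homeomorphic_maps_map by auto
  have gS: "g ` S2 \<subseteq> S2" using g2 unfolding homeomorphic_eq_everything_map by auto
  have eq: "g y = inv_into S2 f y" if "y \<in> S2" for y
    using gi gS that e by (metis image_subset_iff inv_into_f_f)
  have hi: "homeomorphic_map (top_of_set S2) (top_of_set S2) (inv_into S2 f)"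
    using homeomorphic_map_eq[OF g2] eq by simp
  then show "homeomorphic_map (nsphere 2) (nsphere 2) (inv_into S2 f)" using X_eq by simp
  from hi show "continuous_on S2 (inv_into S2 f)"
    unfolding homeomorphic_eq_everything_map using continuous_map_subtopology_eu by blast
qed

lemma oph_homeo: "oph f \<Longrightarrow> homeomorphic_map (nsphere 2) (nsphere 2) f"
  by (simp add: oph_def)

lemma oph_id: "oph id"
  by (simp add: oph_def homeomorphic_map_id)

lemma oph_comp: assumes "oph f" "oph g" shows "oph (g \<circ> f)"
proof -
  have c: "continuous_map (nsphere 2) (nsphere 2) f" "continuous_map (nsphere 2) (nsphere 2) g"
    using assms by (auto simp: oph_def homeomorphic_imp_continuous_map)
  show ?thesis using assms Brouwer_degree2_compose[OF c]
      homeomorphic_map_compose[of "nsphere 2" "nsphere 2" f "nsphere 2" g]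
    by (simp add: oph_def)
qed

lemma oph_inv: assumes "oph f" shows "oph (inv_into S2 f)"
proof -
  note h = homeo_S2[OF oph_homeo[OF assms]]
  have c: "continuous_map (nsphere 2) (nsphere 2) f" "continuous_map (nsphere 2) (nsphere 2) (inv_into S2 f)"
    using assms h(4) by (auto simp: oph_def homeomorphic_imp_continuous_map)
  have "Brouwer_degree2 2 (inv_into S2 f \<circ> f) = Brouwer_degree2 2 id"
    by (rule Brouwer_degree2_eq) (use h(2) in \<open>simp add: S2_def[symmetric]\<close>)
  then have "Brouwer_degree2 2 (inv_into S2 f) * Brouwer_degree2 2 f = 1"
    using Brouwer_degree2_compose[OF c] by simp
  then show ?thesis using assms h(4) by (simp add: oph_def)
qed

lemma mir_mir[simp]: "mir (mir p) = p"
  by (simp add: mir_def fun_eq_iff)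

lemma mir_comp_mir[simp]: "mir \<circ> mir = id"
  by (simp add: fun_eq_iff)

lemma inj_mir: "inj mir"
  by (metis injI mir_mir)

lemma mir_eq_iff[simp]: "mir p = mir q \<longleftrightarrow> p = q"
  by (metis mir_mir)

lemma mir_cm: "continuous_map (nsphere 2) (nsphere 2) mir"
proof -
  have "mir = (\<lambda>x i. if i = 1 then -x i else x i)" by (simp add: mir_def fun_eq_iff)
  then show ?thesis using continuous_map_nsphere_reflection[of 2 1] by simp
qed

lemma mir_homeo: "homeomorphic_map (nsphere 2) (nsphere 2) mir"
  using mir_cm unfolding homeomorphic_map_maps homeomorphic_maps_def by auto

lemma mir_S2: "mir ` S2 = S2"
  using homeo_S2(1)[OF mir_homeo] .

lemma mir_in_S2[simp]: "mir p \<in> S2 \<longleftrightarrow> p \<in> S2"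
  using mir_S2 by (metis image_eqI imageE mir_mir)

lemma oph_conj: assumes "oph f" shows "oph (mir \<circ> f \<circ> mir)"
proof -
  have cf: "continuous_map (nsphere 2) (nsphere 2) f" using assms by (simp add: oph_def homeomorphic_imp_continuous_map)
  have d: "\<bar>Brouwer_degree2 2 mir\<bar> = 1" using Brouwer_degree2_homeomorphic_map[OF mir_homeo] .
  have "Brouwer_degree2 2 (mir \<circ> f \<circ> mir) = (Brouwer_degree2 2 mir * Brouwer_degree2 2 f) * Brouwer_degree2 2 mir"
    using Brouwer_degree2_compose[OF mir_cm continuous_map_compose[OF cf mir_cm]]
      Brouwer_degree2_compose[OF cf mir_cm]
    by simp
  also have "\<dots> = Brouwer_degree2 2 mir * Brouwer_degree2 2 mir" using assms by (simp add: oph_def)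
  also have "\<dots> = 1" using d by (metis abs_mult_self_eq mult_1)
  finally show ?thesis using assms mir_homeo
      homeomorphic_map_compose[of "nsphere 2" "nsphere 2" mir "nsphere 2" f]
      homeomorphic_map_compose[of "nsphere 2" "nsphere 2" "f \<circ> mir" "nsphere 2" mir]
    by (simp add: oph_def comp_assoc)
qed

definition BI :: "rconf \<Rightarrow> pt set set" where
  "BI D = (\<lambda>b. b ` sq) ` bands D"

definition wv :: "rconf \<Rightarrow> bool" where
  "wv D \<longleftrightarrow> (\<forall>c\<in>circles D. c \<subseteq> S2) \<and>
     (\<forall>b\<in>bands D. is_band b \<and> {z \<in> sq. b z \<in> \<Union>(circles D)} = {-1,1} \<times> {-1..1}) \<and>
     (\<forall>b\<in>bands D. \<forall>b'\<in>bands D. b \<noteq> b' \<longrightarrow> disjnt (b ` sq) (b' ` sq))"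

lemma sq_mem: "z \<in> sq \<longleftrightarrow> -1 \<le> fst z \<and> fst z \<le> 1 \<and> -1 \<le> snd z \<and> snd z \<le> 1"
  by (cases z) (auto simp: sq_def)

lemma band_props:
  assumes "is_band b" shows "continuous_on sq b" "inj_on b sq" "b ` sq \<subseteq> S2"
proof -
  have "continuous_map (top_of_set sq) (top_of_set S2) b"
    using assms X_eq by (simp add: is_band_def)
  then have "continuous_on sq b \<and> b \<in> sq \<rightarrow> S2"
    by (simp add: continuous_map_subtopology_eu)
  then show "continuous_on sq b" "b ` sq \<subseteq> S2"
    by (auto simp: image_subset_iff_funcset)
  show "inj_on b sq" using assms by (simp add: is_band_def)
qed

lemma is_circle_S2: "is_circle c \<Longrightarrow> c \<subseteq> S2"
  by (simp add: is_circle_def)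

lemma wv_valid: "valid_conf C \<Longrightarrow> wv C"
  unfolding wv_def valid_conf_def using is_circle_S2 by simp

lemma wvD:
  assumes "wv D"
  shows "\<And>c. c \<in> circles D \<Longrightarrow> c \<subseteq> S2"
    "\<And>b. b \<in> bands D \<Longrightarrow> is_band b"
    "\<And>b z. b \<in> bands D \<Longrightarrow> z \<in> sq \<Longrightarrow> b z \<in> \<Union>(circles D) \<longleftrightarrow> z \<in> {-1,1} \<times> {-1..1}"
    "\<And>b b'. b \<in> bands D \<Longrightarrow> b' \<in> bands D \<Longrightarrow> b \<noteq> b' \<Longrightarrow> disjnt (b ` sq) (b' ` sq)"
proof -
  show "\<And>c. c \<in> circles D \<Longrightarrow> c \<subseteq> S2" using assms unfolding wv_def by simp
  show "\<And>b. b \<in> bands D \<Longrightarrow> is_band b" using assms unfolding wv_def by simp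
  show "\<And>b b'. b \<in> bands D \<Longrightarrow> b' \<in> bands D \<Longrightarrow> b \<noteq> b' \<Longrightarrow> disjnt (b ` sq) (b' ` sq)"
    using assms unfolding wv_def by simp
  fix b z assume b: "b \<in> bands D" and z: "z \<in> sq"
  have "{z \<in> sq. b z \<in> \<Union>(circles D)} = {-1,1} \<times> {-1..1}" using assms b unfolding wv_def by simp
  then have "z \<in> {z \<in> sq. b z \<in> \<Union>(circles D)} \<longleftrightarrow> z \<in> {-1,1} \<times> {-1..1}" by (rule arg_cong)
  then show "b z \<in> \<Union>(circles D) \<longleftrightarrow> z \<in> {-1,1} \<times> {-1..1}" using z by simp
qed

lemma L_sq: "{-1,1} \<times> {-1..1::real} \<subseteq> sq" and T_sq: "{-1..1} \<times> {-1,1::real} \<subseteq> sq"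
  and Lo_sq: "{-1,1} \<times> {-1<..<1::real} \<subseteq> sq" and Vo_sq: "{-1<..<1} \<times> {-1,1::real} \<subseteq> sq"
  by (auto simp: sq_def)

lemma surg_sub: assumes "wv D" shows "surg D \<subseteq> S2"
proof -
  have 1: "\<Union>(circles D) \<subseteq> S2" using wvD(1)[OF assms] by (rule Union_least)
  have 2: "b ` ({-1..1} \<times> {-1,1}) \<subseteq> S2" if "b \<in> bands D" for b
    using order_trans[OF image_mono[OF T_sq] band_props(3)[OF wvD(2)[OF assms that]]] .
  show ?thesis unfolding surg_def
  proof (intro Un_least UN_least)
    show "\<Union>(circles D) - (\<Union>b\<in>bands D. b ` ({-1,1} \<times> {-1<..<1})) \<subseteq> S2"
      using 1 by (rule Diff_subset_conv[THEN iffD2, OF le_supI2])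
  qed (rule 2)
qed

lemma ending_Union: assumes "wv D" shows "\<Union>(ending D) = surg D"
proof -
  have "\<Union>(ending D) = topspace (nsphere 2) \<inter> surg D"
    by (simp only: ending_def Union_connected_components_of topspace_subtopology)
  also have "\<dots> = surg D" using surg_sub[OF assms] unfolding S2_def by blast
  finally show ?thesis .
qed

lemma ending_sub: assumes "wv D" "c \<in> ending D" shows "c \<subseteq> S2"
proof -
  have "c \<subseteq> \<Union>(ending D)" using assms(2) by (rule Union_upper)
  then have "c \<subseteq> surg D" using ending_Union[OF assms(1)] by simp
  then show ?thesis using surg_sub[OF assms(1)] by (rule order_trans)
qed

lemma LT1: "(w::real\<times>real) \<in> {-1,1}\<times>{-1..1} \<Longrightarrow> w \<notin> {-1,1}\<times>{-1<..<1} \<Longrightarrow> w \<in> {-1..1}\<times>{-1,1}"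
  by (cases w) auto
lemma LT2: "(z::real\<times>real) \<in> {-1..1}\<times>{-1,1} \<Longrightarrow> z \<notin> {-1<..<1}\<times>{-1,1} \<Longrightarrow> z \<in> {-1,1}\<times>{-1..1}"
  by (cases z) auto
lemma LT3: "(z::real\<times>real) \<in> {-1<..<1}\<times>{-1,1} \<Longrightarrow> z \<notin> {-1,1}\<times>{-1..1}"
  by (cases z) auto
lemma LT4: "(z::real\<times>real) \<in> {-1,1}\<times>{-1<..<1} \<Longrightarrow> z \<in> {-1,1}\<times>{-1..1}"
  by (cases z) auto

lemma surg_memE:
  assumes "p \<in> surg D"
  obtains "p \<in> \<Union>(circles D)" "\<forall>b\<in>bands D. p \<notin> b ` ({-1,1} \<times> {-1<..<1})"
  | b z where "b \<in> bands D" "z \<in> {-1..1} \<times> {-1,1}" "p = b z"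
proof -
  from assms[unfolded surg_def] show ?thesis
  proof (rule UnE)
    assume a: "p \<in> \<Union>(circles D) - (\<Union>b\<in>bands D. b ` ({-1,1} \<times> {-1<..<1}))"
    then have "p \<in> \<Union>(circles D)" by (rule DiffD1)
    moreover have "\<forall>b\<in>bands D. p \<notin> b ` ({-1,1} \<times> {-1<..<1})" using a by simp
    ultimately show ?thesis by (rule that(1))
  next
    assume "p \<in> (\<Union>b\<in>bands D. b ` ({-1..1} \<times> {-1,1}))"
    then obtain b where b: "b \<in> bands D" "p \<in> b ` ({-1..1} \<times> {-1,1})" by (rule UN_E)
    from b(2) obtain z where "z \<in> {-1..1} \<times> {-1,1}" "p = b z" by (rule imageE) simp
    then show ?thesis using b(1) that(2) by simp
  qed
qed

lemma band_surg:
  assumes D: "wv D" and b: "b \<in> bands D" and w: "w \<in> sq"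
  shows "b w \<in> surg D \<longleftrightarrow> w \<in> {-1..1} \<times> {-1,1}"
proof
  assume "w \<in> {-1..1} \<times> {-1,1}"
  then have "b w \<in> b ` ({-1..1} \<times> {-1,1})" by (rule imageI)
  then show "b w \<in> surg D" using b unfolding surg_def by (intro UnI2 UN_I)
next
  assume s: "b w \<in> surg D"
  note ib = band_props(2)[OF wvD(2)[OF D b]]
  from s show "w \<in> {-1..1} \<times> {-1,1}"
  proof (cases rule: surg_memE)
    case 1
    have "b w \<notin> b ` ({-1,1} \<times> {-1<..<1})" using 1(2) b by simp
    then have n: "w \<notin> {-1,1} \<times> {-1<..<1}" by (metis imageI)
    have "w \<in> {-1,1} \<times> {-1..1}" using wvD(3)[OF D b w] 1(1) by simp
    then show ?thesis using n by (rule LT1)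
  next
    case (2 b' z)
    have "z \<in> sq" using 2(2) T_sq by (rule subsetD[rotated])
    show ?thesis
    proof (cases "b' = b")
      case True
      then have "w = z" using ib 2(3) w \<open>z \<in> sq\<close> inj_onD by metis
      then show ?thesis using 2(2) by simp
    next
      case False
      have "disjnt (b ` sq) (b' ` sq)" using wvD(4)[OF D b 2(1)] False by simp
      moreover have "b w \<in> b ` sq" using w by (rule imageI)
      moreover have "b w \<in> b' ` sq" using 2(3) \<open>z \<in> sq\<close> by simp
      ultimately show ?thesis by (simp add: disjnt_iff)
    qed
  qed
qed

lemma swap_img: "(\<lambda>x. b (prod.swap x)) ` (A \<times> B) = b ` (B \<times> A)"
proof -
  have "(\<lambda>x. b (prod.swap x)) ` (A \<times> B) = b ` (prod.swap ` (A \<times> B))" by (simp add: image_image)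
  then show ?thesis by (simp add: product_swap)
qed

lemma surg_dual: assumes D: "wv D" shows "surg (dual D) = \<Union>(circles D)"
proof -
  have e1: "(\<Union>b\<in>bands (dual D). b ` ({-1,1} \<times> {-1<..<1})) = (\<Union>b\<in>bands D. b ` ({-1<..<1} \<times> {-1,1}))"
    by (simp add: dual_def swap_img)
  have e2: "(\<Union>b\<in>bands (dual D). b ` ({-1..1} \<times> {-1,1})) = (\<Union>b\<in>bands D. b ` ({-1,1} \<times> {-1..1}))"
    by (simp add: dual_def swap_img)
  have e3: "\<Union>(circles (dual D)) = surg D" using ending_Union[OF D] by (simp add: dual_def)
  have "(surg D - (\<Union>b\<in>bands D. b ` ({-1<..<1} \<times> {-1,1}))) \<union> (\<Union>b\<in>bands D. b ` ({-1,1} \<times> {-1..1}))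
        = \<Union>(circles D)" (is "?l = ?r")
  proof (rule Set.set_eqI)
    fix p
    have inL: "p \<in> \<Union>(circles D)" if b: "b \<in> bands D" and z: "z \<in> {-1,1} \<times> {-1..1}" and p: "p = b z" for b z
    proof -
      have "z \<in> sq" using z L_sq by (rule subsetD[rotated])
      then show ?thesis using wvD(3)[OF D b \<open>z \<in> sq\<close>] z p by simp
    qed
    show "p \<in> ?l \<longleftrightarrow> p \<in> ?r"
    proof
      assume "p \<in> ?l"
      then show "p \<in> ?r"
      proof (rule UnE)
        assume "p \<in> (\<Union>b\<in>bands D. b ` ({-1,1} \<times> {-1..1}))"
        then obtain b where b: "b \<in> bands D" "p \<in> b ` ({-1,1} \<times> {-1..1})" by (rule UN_E)
        from b(2) obtain z where "z \<in> {-1,1} \<times> {-1..1}" "p = b z" by (rule imageE) simp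
        then show ?thesis using inL b(1) by simp
      next
        assume a: "p \<in> surg D - (\<Union>b\<in>bands D. b ` ({-1<..<1} \<times> {-1,1}))"
        then have nV: "\<forall>b\<in>bands D. p \<notin> b ` ({-1<..<1} \<times> {-1,1})" by simp
        from a have "p \<in> surg D" by (rule DiffD1)
        then show ?thesis
        proof (cases rule: surg_memE)
          case 1 then show ?thesis by simp
        next
          case (2 b z)
          have "z \<notin> {-1<..<1} \<times> {-1,1}"
          proof
            assume "z \<in> {-1<..<1} \<times> {-1,1}"
            then have "b z \<in> b ` ({-1<..<1} \<times> {-1,1})" by (rule imageI)
            then show False using nV 2 by simp
          qed
          with 2(2) have "z \<in> {-1,1} \<times> {-1..1}" by (rule LT2)
          then show ?thesis using inL 2 by simp
        qed
      qed
    next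
      assume pr: "p \<in> ?r"
      show "p \<in> ?l"
      proof (cases "\<exists>b\<in>bands D. p \<in> b ` ({-1,1} \<times> {-1..1})")
        case True then show ?thesis by simp
      next
        case False
        have nLo: "\<forall>b\<in>bands D. p \<notin> b ` ({-1,1} \<times> {-1<..<1})"
        proof (intro ballI notI)
          fix b assume b: "b \<in> bands D" and pb: "p \<in> b ` ({-1,1} \<times> {-1<..<1})"
          from pb obtain z where "z \<in> {-1,1} \<times> {-1<..<1}" "p = b z" by (rule imageE) simp
          then have "p \<in> b ` ({-1,1} \<times> {-1..1})" using LT4 by simp
          then show False using False b by simp
        qed
        have ps: "p \<in> surg D" unfolding surg_def using pr nLo by simp
        have nV: "p \<notin> b ` ({-1<..<1} \<times> {-1,1})" if b: "b \<in> bands D" for b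
        proof
          assume "p \<in> b ` ({-1<..<1} \<times> {-1,1})"
          then obtain z where z: "z \<in> {-1<..<1} \<times> {-1,1}" "p = b z" by (rule imageE) simp
          have "z \<in> sq" using z(1) Vo_sq by (rule subsetD[rotated])
          then have "z \<in> {-1,1} \<times> {-1..1}" using wvD(3)[OF D b \<open>z \<in> sq\<close>] pr z by simp
          then show False using LT3[OF z(1)] by simp
        qed
        show ?thesis using ps nV by simp
      qed
    qed
  qed
  then show ?thesis unfolding surg_def[of "dual D"] e1 e2 e3 .
qed

lemma comps_union:
  assumes fin: "finite CC" and pd: "pairwise disjnt CC"
    and cc: "\<And>c. c \<in> CC \<Longrightarrow> connectedin X c \<and> closedin X c \<and> c \<noteq> {}"
  shows "connected_components_of (subtopology X (\<Union>CC)) = CC"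
proof -
  define Y where "Y = subtopology X (\<Union>CC)"
  have tY: "topspace Y = \<Union>CC"
    using cc closedin_subset unfolding Y_def by (auto simp: topspace_subtopology)
  have key: "connected_component_of_set Y x = c" if c: "c \<in> CC" and x: "x \<in> c" for c x
  proof
    have "connectedin Y c" unfolding Y_def connectedin_subtopology using cc[OF c] c by blast
    then show "c \<subseteq> connected_component_of_set Y x" using x by (rule connected_component_of_maximal)
  next
    have cl: "closedin Y c" unfolding Y_def closedin_subtopology
      using cc[OF c] c by blast
    have rest: "topspace Y - c = \<Union>(CC - {c})"
    proof -
      have "\<Union>CC - \<Union>{c} = \<Union>(CC - {c})"
        using c by (intro diff_Union_pairwise_disjoint[OF pd]) simp
      then show ?thesis using tY by simp
    qed
    have "closedin X (\<Union>(CC - {c}))" using fin cc by (intro closedin_Union) auto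
    moreover have "\<Union>(CC - {c}) = \<Union>(CC - {c}) \<inter> \<Union>CC" by (rule Int_absorb2[symmetric]) (rule Union_mono, rule Diff_subset)
    ultimately have "closedin Y (\<Union>(CC - {c}))" unfolding Y_def closedin_subtopology by (rule exI[where x="\<Union>(CC - {c})", OF conjI])
    then have "closedin Y (topspace Y - c)" unfolding rest .
    then have op: "openin Y c" unfolding openin_closedin_eq using tY c by blast
    have "connected_component_of_set Y x \<subseteq> c \<or> disjnt (connected_component_of_set Y x) c"
      using connectedin_clopen_cases[OF connectedin_connected_component_of cl op] .
    moreover have "x \<in> connected_component_of_set Y x"
      using x c tY by (auto simp add: connected_component_of_refl)
    ultimately show "connected_component_of_set Y x \<subseteq> c" using x by (auto simp: disjnt_def)
  qed
  show ?thesis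
  proof
    show "connected_components_of (subtopology X (\<Union>CC)) \<subseteq> CC"
      unfolding Y_def[symmetric] connected_components_of_def tY using key by auto
    show "CC \<subseteq> connected_components_of (subtopology X (\<Union>CC))"
    proof
      fix c assume c: "c \<in> CC"
      then obtain x where x: "x \<in> c" using cc by blast
      then have "connected_component_of_set Y x \<in> connected_components_of Y"
        using c tY by (auto simp add: connected_component_in_connected_components_of)
      then show "c \<in> connected_components_of (subtopology X (\<Union>CC))" using key[OF c x] Y_def by simp
    qed
  qed
qed

lemma nsphere1_props: "compact_space (nsphere 1)" "connected_space (nsphere 1)" "nsphere 1 \<noteq> trivial_topology"
proof -
  have "\<exists>f g. homeomorphic_maps (nsphere (DIM(complex) - 1)) (top_of_set (sphere 0 1 \<inter> span (Basis::complex set))) f g"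
    by (rule homeomorphic_maps_nsphere_euclidean_sphere[of "Basis::complex set" "DIM(complex)"])
      (auto simp: independent_Basis orthogonal_Basis)
  then obtain f :: "(nat \<Rightarrow> real) \<Rightarrow> complex" and g
    where "homeomorphic_maps (nsphere (DIM(complex) - 1)) (top_of_set (sphere 0 1 \<inter> span Basis)) f g"
    by blast
  then have h: "nsphere 1 homeomorphic_space top_of_set (sphere (0::complex) 1)"
    using homeomorphic_maps_imp_homeomorphic_space by (simp add: span_Basis)
  have "compact_space (top_of_set (sphere (0::complex) 1))"
    by (simp add: compact_space_def compactin_subtopology)
  then show "compact_space (nsphere 1)" using homeomorphic_compact_space[OF h] by simp
  have "connected_space (top_of_set (sphere (0::complex) 1))"
    using connected_sphere[of "0::complex" 1]
    by (simp add: connectedin_topspace[symmetric] connectedin_subtopology)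
  then show "connected_space (nsphere 1)" using homeomorphic_connected_space[OF h] by simp
  have "top_of_set (sphere (0::complex) 1) \<noteq> trivial_topology"
  proof
    assume "top_of_set (sphere (0::complex) 1) = trivial_topology"
    then have "topspace (top_of_set (sphere (0::complex) 1)) = {}" by simp
    moreover have "(1::complex) \<in> sphere 0 1" by simp
    ultimately show False by simp
  qed
  then show "nsphere 1 \<noteq> trivial_topology" using homeomorphic_empty_space[OF h] by simp
qed

lemma circle_props:
  assumes "is_circle c"
  shows "connectedin (nsphere 2) c" "closedin (nsphere 2) c" "c \<noteq> {}"
proof -
  have cS: "c \<subseteq> topspace (nsphere 2)" using assms by (simp add: is_circle_def S2_def)
  have h: "subtopology (nsphere 2) c homeomorphic_space nsphere 1" using assms by (simp add: is_circle_def)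
  show "connectedin (nsphere 2) c"
    unfolding connectedin_def using cS homeomorphic_connected_space[OF h] nsphere1_props by simp
  have "compactin (nsphere 2) c"
    unfolding compactin_subspace using cS homeomorphic_compact_space[OF h] nsphere1_props by simp
  moreover have "Hausdorff_space (nsphere 2)"
    unfolding X_eq by (rule Hausdorff_space_subtopology) simp
  ultimately show "closedin (nsphere 2) c" using compactin_imp_closedin by blast
  have "subtopology (nsphere 2) c \<noteq> trivial_topology"
    using homeomorphic_empty_space[OF h] nsphere1_props by simp
  then show "c \<noteq> {}" by auto
qed

lemma ending_dual: assumes "valid_conf C" shows "ending (dual C) = circles C"
proof -
  have "ending (dual C) = connected_components_of (subtopology (nsphere 2) (\<Union>(circles C)))"
    unfolding ending_def surg_dual[OF wv_valid[OF assms]] ..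
  also have "\<dots> = circles C"
    using assms circle_props unfolding valid_conf_def by (intro comps_union) auto
  finally show ?thesis .
qed

lemma img_img: "img f (img g A) = img (f \<circ> g) A"
  by (simp add: img_def image_image image_comp)

lemma img_mir_mir[simp]: "img mir (img mir A) = A"
  by (simp add: img_def image_image)

lemma inj_img_mir: "inj (img mir)"
  by (metis injI img_mir_mir)


lemma image_mir_mir[simp]: "mir ` mir ` S = S"
  by (simp add: image_image)

lemma inj_image_mir: "inj (image mir)"
  by (metis injI image_mir_mir)

lemma img_mir_diff: "img mir (A - B) = img mir A - img mir B"
  unfolding img_def by (rule image_set_diff[OF inj_image_mir])

lemma img_mir_mem: "mir ` x \<in> img mir A \<longleftrightarrow> x \<in> A"
  using inj_image_mir unfolding img_def by (rule inj_image_mem_iff)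

lemma swap_sq: "prod.swap ` sq = sq"
  by (simp add: sq_def product_swap)

lemma surg_mirror: "surg (mirror D) = mir ` surg D"
  by (simp add: surg_def mirror_def image_Union image_UN image_comp image_set_diff[OF inj_mir] image_Un)

lemma HC:
  assumes f: "homeomorphic_map (nsphere 2) (nsphere 2) f" and S: "S \<subseteq> S2"
  shows "connected_components_of (subtopology (nsphere 2) (f ` S)) = img f (connected_components_of (subtopology (nsphere 2) S))"
proof -
  have fS: "f ` S \<subseteq> S2" using homeo_S2(1)[OF f] S by blast
  have "f ` (topspace (nsphere 2) \<inter> S) = topspace (nsphere 2) \<inter> f ` S"
    using S fS unfolding S2_def by (simp add: Int_absorb1)
  then have "homeomorphic_map (subtopology (nsphere 2) S) (subtopology (nsphere 2) (f ` S)) f"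
    by (rule homeomorphic_map_subtopologies[OF f])
  then show ?thesis unfolding img_def by (rule homeomorphic_map_connected_components_of)
qed

lemma ending_mirror: assumes "surg D \<subseteq> S2" shows "ending (mirror D) = img mir (ending D)"
  unfolding ending_def surg_mirror using HC[OF mir_homeo assms] .

lemma circles_md: "circles (md C) = img mir (ending C)"
  by (simp add: md_def mirror_def dual_def img_def)

lemma bands_md: "bands (md C) = (\<lambda>b. mir \<circ> b \<circ> prod.swap) ` bands C"
  by (simp add: md_def mirror_def dual_def image_image comp_assoc)

lemma ending_md: assumes "valid_conf C" shows "ending (md C) = img mir (circles C)"
proof -
  have "surg (dual C) \<subseteq> S2" using surg_dual[OF wv_valid[OF assms]] wvD(1)[OF wv_valid[OF assms]] by auto
  then show ?thesis unfolding md_def using ending_mirror ending_dual[OF assms] by simp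
qed

lemma BI_md: "BI (md C) = img mir (BI C)"
proof -
  have "(mir \<circ> b \<circ> prod.swap) ` sq = mir ` b ` sq" for b :: "real \<times> real \<Rightarrow> pt"
    by (metis image_comp swap_sq)
  then show ?thesis by (simp add: BI_def bands_md img_def image_image)
qed

lemma md_md: assumes "valid_conf C" shows "md (md C) = C"
proof -
  have c: "circles (md (md C)) = circles C"
    using circles_md[of "md C"] ending_md[OF assms] by simp
  have "bands (md (md C)) = (\<lambda>b. mir \<circ> b \<circ> prod.swap) ` (\<lambda>b. mir \<circ> b \<circ> prod.swap) ` bands C"
    by (simp add: bands_md)
  also have "\<dots> = bands C"
  proof -
    have "mir \<circ> (mir \<circ> b \<circ> prod.swap) \<circ> prod.swap = b" for b :: "real \<times> real \<Rightarrow> pt"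
      by (simp add: fun_eq_iff)
    then show ?thesis by (simp add: image_image)
  qed
  finally show ?thesis using c by simp
qed

lemma union_img_mir: "\<Union>(img mir A) = mir ` \<Union>A"
  by (simp add: img_def image_Union)

lemma wv_md: assumes D: "wv D" shows "wv (md D)"
  unfolding wv_def
proof (intro conjI ballI impI)
  fix c assume "c \<in> circles (md D)"
  then obtain e where e: "e \<in> ending D" "c = mir ` e" by (auto simp: circles_md img_def)
  show "c \<subseteq> S2" using ending_sub[OF D e(1)] e(2) mir_in_S2 by blast
next
  fix b' assume "b' \<in> bands (md D)"
  then obtain b where b: "b \<in> bands D" and b': "b' = mir \<circ> b \<circ> prod.swap" by (auto simp: bands_md)
  note bb = wvD(2)[OF D b]
  have csw: "continuous_map (top_of_set sq) (top_of_set sq) prod.swap"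
    using swap_sq by (simp add: continuous_on_swap image_subset_iff_funcset[symmetric])
  have cb: "continuous_map (top_of_set sq) (nsphere 2) b" using bb by (simp add: is_band_def)
  have "continuous_map (top_of_set sq) (nsphere 2) b'"
    unfolding b' by (rule continuous_map_compose[OF csw continuous_map_compose[OF cb mir_cm]])
  moreover have "inj_on b' sq"
  proof -
    have "inj_on (b \<circ> prod.swap) sq"
      using band_props(2)[OF bb] swap_sq by (intro comp_inj_on) (auto simp: inj_on_def)
    then show ?thesis unfolding b' using inj_mir
      by (simp add: comp_assoc inj_on_def)
  qed
  ultimately show "is_band b'" by (simp add: is_band_def)
  have U: "\<Union>(circles (md D)) = mir ` surg D"
    by (simp add: circles_md union_img_mir ending_Union[OF D])
  show "{z \<in> sq. b' z \<in> \<Union>(circles (md D))} = {-1,1} \<times> {-1..1}"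
  proof (rule Set.set_eqI)
    fix z :: "real \<times> real"
    have "z \<in> {z \<in> sq. b' z \<in> \<Union>(circles (md D))} \<longleftrightarrow> z \<in> sq \<and> b (prod.swap z) \<in> surg D"
      unfolding U b' by (simp add: inj_image_mem_iff[OF inj_mir])
    also have "\<dots> \<longleftrightarrow> z \<in> sq \<and> prod.swap z \<in> {-1..1} \<times> {-1,1}"
    proof (cases "z \<in> sq")
      case True
      then have sw: "prod.swap z \<in> sq" using swap_sq by blast
      show ?thesis using band_surg[OF D b sw] True by simp
    next
      case False
      then show ?thesis by simp
    qed
    also have "\<dots> \<longleftrightarrow> z \<in> {-1,1} \<times> {-1..1}"
      by (cases z) (auto simp: sq_def)
    finally show "z \<in> {z \<in> sq. b' z \<in> \<Union>(circles (md D))} \<longleftrightarrow> z \<in> {-1,1} \<times> {-1..1}" .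
  qed
next
  fix b1' b2' assume b1: "b1' \<in> bands (md D)" and b2: "b2' \<in> bands (md D)" and ne: "b1' \<noteq> b2'"
  obtain b1 where b1D: "b1 \<in> bands D" and e1: "b1' = mir \<circ> b1 \<circ> prod.swap" using b1 by (auto simp: bands_md)
  obtain b2 where b2D: "b2 \<in> bands D" and e2: "b2' = mir \<circ> b2 \<circ> prod.swap" using b2 by (auto simp: bands_md)
  have "b1 \<noteq> b2" using ne e1 e2 by auto
  then have d: "disjnt (b1 ` sq) (b2 ` sq)" using wvD(4)[OF D b1D b2D] by simp
  have i: "b' ` sq = mir ` (b ` sq)" if "b' = mir \<circ> b \<circ> prod.swap" for b b'
    using that by (metis image_comp swap_sq)
  show "disjnt (b1' ` sq) (b2' ` sq)"
    unfolding i[OF e1] i[OF e2] using d inj_mir by (simp add: disjnt_def image_Int[symmetric])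
qed

definition Isq :: "(real \<times> real) set" where "Isq = {-1<..<1} \<times> {-1<..<1}"

lemma interior_sq: "interior sq = Isq"
  by (simp add: sq_def Isq_def interior_Times)

lemma open_Isq: "open Isq"
  by (simp add: Isq_def open_Times)

lemma Isq_sub: "Isq \<subseteq> sq"
  by (auto simp: Isq_def sq_def)

lemma closure_Vo: "closure ({-1<..<1::real} \<times> {-1,1::real}) = {-1..1::real} \<times> {-1,1::real}"
proof -
  have "closure {-1,1::real} = {-1,1}" by (simp add: closure_closed finite_imp_closed)
  moreover have "closure {-1<..<1::real} = {-1..1}" by (rule closure_greaterThanLessThan) simp
  ultimately show ?thesis by (simp add: closure_Times)
qed

lemma closed_T: "closed ({-1..1::real} \<times> {-1,1::real})"
  by (intro closed_Times closed_atLeastAtMost finite_imp_closed) auto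

lemma sq_set1: "sq - Isq - {-1,1::real} \<times> {-1..1::real} = {-1<..<1::real} \<times> {-1,1::real}"
proof (rule Set.set_eqI)
  fix z :: "real \<times> real"
  show "z \<in> sq - Isq - {-1,1} \<times> {-1..1} \<longleftrightarrow> z \<in> {-1<..<1} \<times> {-1,1}"
    by (cases z) (auto simp: sq_def Isq_def)
qed

lemma sq_set2: "{-1,1::real} \<times> {-1..1::real} - {-1..1::real} \<times> {-1,1::real} = {-1,1::real} \<times> {-1<..<1::real}"
proof (rule Set.set_eqI)
  fix z :: "real \<times> real"
  show "z \<in> {-1,1} \<times> {-1..1} - {-1..1} \<times> {-1,1} \<longleftrightarrow> z \<in> {-1,1} \<times> {-1<..<1}"
    by (cases z) auto
qed

lemma sq_int_sub:
  assumes c: "continuous_on sq h" and s: "h ` sq \<subseteq> sq" and i: "inj_on h sq"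
  shows "h ` Isq \<subseteq> Isq"
proof -
  have "open (h ` Isq)"
    using invariance_of_domain[OF continuous_on_subset[OF c Isq_sub] open_Isq inj_on_subset[OF i Isq_sub]] .
  moreover have "h ` Isq \<subseteq> sq" using s Isq_sub by blast
  ultimately show ?thesis using interior_maximal interior_sq by blast
qed

locale sqh =
  fixes h k :: "real \<times> real \<Rightarrow> real \<times> real"
  assumes ch: "continuous_on sq h" and ck: "continuous_on sq k"
    and hs: "h ` sq \<subseteq> sq" and ks: "k ` sq \<subseteq> sq"
    and kh: "\<And>x. x \<in> sq \<Longrightarrow> k (h x) = x" and hk: "\<And>x. x \<in> sq \<Longrightarrow> h (k x) = x"
begin

lemma ih: "inj_on h sq" by (metis inj_onI kh)
lemma ik: "inj_on k sq" by (metis inj_onI hk)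

lemma bd_sub: "h ` (sq - Isq) \<subseteq> sq - Isq"
proof
  fix y assume "y \<in> h ` (sq - Isq)"
  then obtain x where x: "x \<in> sq" "x \<notin> Isq" "y = h x" by blast
  have "y \<in> sq" using x hs by blast
  moreover have "y \<notin> Isq"
  proof
    assume "y \<in> Isq"
    then have "k y \<in> Isq" using sq_int_sub[OF ck ks ik] by blast
    then show False using x kh by simp
  qed
  ultimately show "y \<in> sq - Isq" by blast
qed

lemma Vo_sub:
  assumes hL: "h ` ({-1,1} \<times> {-1..1}) = {-1,1} \<times> {-1..1}"
  shows "h ` ({-1<..<1} \<times> {-1,1}) \<subseteq> {-1<..<1} \<times> {-1,1}"
proof -
  have kL: "k ` ({-1,1} \<times> {-1..1}) = {-1,1} \<times> {-1..1}"
  proof -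
    have "k ` h ` ({-1,1} \<times> {-1..1}) = {-1,1} \<times> {-1..1}"
      using kh L_sq by (force simp: image_image)
    then show ?thesis using hL by simp
  qed
  show ?thesis unfolding sq_set1[symmetric]
  proof
    fix y assume "y \<in> h ` (sq - Isq - {-1,1} \<times> {-1..1})"
    then obtain x where x: "x \<in> sq" "x \<notin> Isq" "x \<notin> {-1,1} \<times> {-1..1}" "y = h x" by blast
    have "y \<in> sq - Isq" using bd_sub x by blast
    moreover have "y \<notin> {-1,1} \<times> {-1..1}"
    proof
      assume "y \<in> {-1,1} \<times> {-1..1}"
      then have "k y \<in> {-1,1} \<times> {-1..1}" using kL by blast
      then show False using x kh by simp
    qed
    ultimately show "y \<in> sq - Isq - {-1,1} \<times> {-1..1}" by blast
  qed
qed

lemma T_sub: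
  assumes hL: "h ` ({-1,1} \<times> {-1..1}) = {-1,1} \<times> {-1..1}"
  shows "h ` ({-1..1} \<times> {-1,1}) \<subseteq> {-1..1} \<times> {-1,1}"
proof -
  have "h ` closure ({-1<..<1} \<times> {-1,1}) \<subseteq> {-1..1} \<times> {-1,1}"
  proof (rule image_closure_subset)
    show "continuous_on (closure ({-1<..<1} \<times> {-1,1})) h"
      unfolding closure_Vo using continuous_on_subset[OF ch T_sq] .
    show "closed ({-1..1::real} \<times> {-1,1::real})" by (rule closed_T)
    show "h ` ({-1<..<1} \<times> {-1,1}) \<subseteq> {-1..1} \<times> {-1,1}"
      using Vo_sub[OF hL] by (auto)
  qed
  then show ?thesis unfolding closure_Vo .
qed

end

lemma sqh_sym: "sqh h k \<Longrightarrow> sqh k h"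
  unfolding sqh_def by blast

lemma sqh_main:
  assumes "sqh h k" and hL: "h ` ({-1,1} \<times> {-1..1}) = {-1,1} \<times> {-1..1}"
  shows "h ` ({-1..1} \<times> {-1,1}) = {-1..1} \<times> {-1,1}" "h ` ({-1,1} \<times> {-1<..<1}) = {-1,1} \<times> {-1<..<1}"
proof -
  interpret sqh h k by fact
  interpret k: sqh k h by (rule sqh_sym) fact
  have kL: "k ` ({-1,1} \<times> {-1..1}) = {-1,1} \<times> {-1..1}"
  proof -
    have "k ` h ` ({-1,1} \<times> {-1..1}) = {-1,1} \<times> {-1..1}"
      using kh L_sq by (force simp: image_image)
    then show ?thesis using hL by simp
  qed
  have "k ` ({-1..1} \<times> {-1,1}) \<subseteq> {-1..1} \<times> {-1,1}" by (rule k.T_sub[OF kL])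
  then have "h ` k ` ({-1..1} \<times> {-1,1}) \<subseteq> h ` ({-1..1} \<times> {-1,1})" by (rule image_mono)
  moreover have "h ` k ` ({-1..1} \<times> {-1,1}) = {-1..1} \<times> {-1,1}"
    using hk T_sq by (force simp: image_image)
  ultimately have "{-1..1} \<times> {-1,1} \<subseteq> h ` ({-1..1} \<times> {-1,1})" by simp
  then show hT: "h ` ({-1..1} \<times> {-1,1}) = {-1..1} \<times> {-1,1}"
    by (rule subset_antisym[OF T_sub[OF hL]])
  have "h ` ({-1,1} \<times> {-1..1} - {-1..1} \<times> {-1,1}) = h ` ({-1,1} \<times> {-1..1}) - h ` ({-1..1} \<times> {-1,1})"
    by (rule inj_on_image_set_diff[OF ih]) (use L_sq T_sq in auto)
  then show "h ` ({-1,1} \<times> {-1<..<1}) = {-1,1} \<times> {-1<..<1}"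
    unfolding sq_set2 hL hT .
qed

lemma compact_sq: "compact sq"
  by (simp add: sq_def compact_Times)

lemma band_L: assumes D: "wv D" and b: "b \<in> bands D"
  shows "b ` ({-1,1} \<times> {-1..1}) = b ` sq \<inter> \<Union>(circles D)"
proof (rule Set.set_eqI)
  fix p
  show "p \<in> b ` ({-1,1} \<times> {-1..1}) \<longleftrightarrow> p \<in> b ` sq \<inter> \<Union>(circles D)"
  proof
    assume "p \<in> b ` ({-1,1} \<times> {-1..1})"
    then obtain z where z: "z \<in> {-1,1} \<times> {-1..1}" "p = b z" by blast
    have zs: "z \<in> sq" using z(1) L_sq by (rule subsetD[rotated])
    show "p \<in> b ` sq \<inter> \<Union>(circles D)" using wvD(3)[OF D b zs] z zs by simp
  next
    assume "p \<in> b ` sq \<inter> \<Union>(circles D)"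
    then obtain z where z: "z \<in> sq" "p = b z" "b z \<in> \<Union>(circles D)" by blast
    then show "p \<in> b ` ({-1,1} \<times> {-1..1})" using wvD(3)[OF D b z(1)] by simp
  qed
qed

lemma band_pair:
  assumes D: "wv D" and D': "wv D'" and f: "homeomorphic_map (nsphere 2) (nsphere 2) f"
    and fU: "f ` \<Union>(circles D) = \<Union>(circles D')"
    and b: "b \<in> bands D" and b': "b' \<in> bands D'" and fb: "f ` b ` sq = b' ` sq"
  shows "f ` b ` ({-1,1} \<times> {-1<..<1}) = b' ` ({-1,1} \<times> {-1<..<1})"
        "f ` b ` ({-1..1} \<times> {-1,1}) = b' ` ({-1..1} \<times> {-1,1})"
proof -
  note fS = homeo_S2[OF f]
  note bp = band_props[OF wvD(2)[OF D b]] and bp' = band_props[OF wvD(2)[OF D' b']]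
  define h where "h = inv_into sq b' \<circ> (f \<circ> b)"
  define k where "k = inv_into sq b \<circ> (inv_into S2 f \<circ> b')"
  have bS: "b x \<in> S2" if "x \<in> sq" for x using bp(3) that by blast
  have bS': "b' x \<in> S2" if "x \<in> sq" for x using bp'(3) that by blast
  have fbx: "f (b x) \<in> b' ` sq" if "x \<in> sq" for x using fb that by blast
  have hsq: "h x \<in> sq" if "x \<in> sq" for x
    unfolding h_def using fbx[OF that] by (simp add: inv_into_into)
  have bh: "b' (h x) = f (b x)" if "x \<in> sq" for x
    unfolding h_def using fbx[OF that] by (simp add: f_inv_into_f)
  have fi: "inv_into S2 f (f (b x)) = b x" if "x \<in> sq" for x
    using fS(2) bS[OF that] by (rule inv_into_f_f)
  have bk: "inv_into S2 f (b' y) \<in> b ` sq" if "y \<in> sq" for y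
  proof -
    have "b' y \<in> f ` b ` sq" using fb that by blast
    then obtain x where "x \<in> sq" "b' y = f (b x)" by blast
    then show ?thesis using fi by simp
  qed
  have ksq: "k y \<in> sq" if "y \<in> sq" for y
    unfolding k_def using bk[OF that] by (simp add: inv_into_into)
  have bkk: "b (k y) = inv_into S2 f (b' y)" if "y \<in> sq" for y
    unfolding k_def using bk[OF that] by (simp add: f_inv_into_f)
  have kh: "k (h x) = x" if "x \<in> sq" for x
  proof -
    have "k (h x) = inv_into sq b (inv_into S2 f (b' (h x)))" by (simp add: k_def)
    also have "\<dots> = inv_into sq b (b x)" using bh[OF that] fi[OF that] by simp
    also have "\<dots> = x" using bp(2) that by (rule inv_into_f_f)
    finally show ?thesis .
  qed
  have hk: "h (k y) = y" if "y \<in> sq" for y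
  proof -
    have "h (k y) = inv_into sq b' (f (b (k y)))" by (simp add: h_def)
    also have "\<dots> = inv_into sq b' (f (inv_into S2 f (b' y)))" using bkk[OF that] by simp
    also have "\<dots> = inv_into sq b' (b' y)"
    proof -
      have "b' y \<in> f ` S2" using fS(1) bS'[OF that] by simp
      then show ?thesis by (simp add: f_inv_into_f)
    qed
    also have "\<dots> = y" using bp'(2) that by (rule inv_into_f_f)
    finally show ?thesis .
  qed
  have ci': "continuous_on (b' ` sq) (inv_into sq b')"
    by (rule continuous_on_inv[OF bp'(1) compact_sq]) (simp add: bp'(2))
  have ci: "continuous_on (b ` sq) (inv_into sq b)"
    by (rule continuous_on_inv[OF bp(1) compact_sq]) (simp add: bp(2))
  have cfb: "continuous_on sq (f \<circ> b)"
    by (rule continuous_on_compose[OF bp(1) continuous_on_subset[OF fS(3) bp(3)]])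
  have ch: "continuous_on sq h"
  proof -
    have "(f \<circ> b) ` sq = b' ` sq" using fb by (simp add: image_comp)
    then show ?thesis unfolding h_def using continuous_on_compose[OF cfb, of "inv_into sq b'"] ci' by simp
  qed
  have e2: "(inv_into S2 f \<circ> b') ` sq = b ` sq"
  proof -
    have "(inv_into S2 f \<circ> b') ` sq = inv_into S2 f ` (b' ` sq)" by (rule image_comp[symmetric])
    also have "\<dots> = inv_into S2 f ` f ` b ` sq" by (simp only: fb)
    also have "\<dots> = b ` sq" using fS(2) bp(3) by (rule inv_into_image_cancel)
    finally show ?thesis .
  qed
  have cfb': "continuous_on sq (inv_into S2 f \<circ> b')"
    by (rule continuous_on_compose[OF bp'(1) continuous_on_subset[OF fS(5) bp'(3)]])
  have ck: "continuous_on sq k"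
    unfolding k_def using continuous_on_compose[OF cfb', of "inv_into sq b"] ci unfolding e2 by simp
  have sqh: "sqh h k"
    by unfold_locales (use ch ck hsq ksq kh hk in auto)
  have fL: "f ` b ` ({-1,1} \<times> {-1..1}) = b' ` ({-1,1} \<times> {-1..1})"
  proof -
    have "f ` (b ` sq \<inter> \<Union>(circles D)) = f ` b ` sq \<inter> f ` \<Union>(circles D)"
      using fS(2) bp(3) wvD(1)[OF D] by (intro inj_on_image_Int) auto
    then show ?thesis unfolding band_L[OF D b] band_L[OF D' b'] fb fU .
  qed
  have fbh: "f ` b ` S = b' ` h ` S" if "S \<subseteq> sq" for S
  proof -
    have "f ` b ` S = (\<lambda>x. f (b x)) ` S" by (simp add: image_image)
    also have "\<dots> = (\<lambda>x. b' (h x)) ` S" using bh that by (intro image_cong) auto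
    finally show ?thesis by (simp add: image_image)
  qed
  have hL: "h ` ({-1,1} \<times> {-1..1}) = {-1,1} \<times> {-1..1}"
  proof -
    have "h ` ({-1,1} \<times> {-1..1}) = inv_into sq b' ` f ` b ` ({-1,1} \<times> {-1..1})"
      by (simp add: h_def image_comp)
    also have "\<dots> = {-1,1} \<times> {-1..1}" unfolding fL using bp'(2) L_sq by (rule inv_into_image_cancel)
    finally show ?thesis .
  qed
  note m = sqh_main[OF sqh hL]
  show "f ` b ` ({-1,1} \<times> {-1<..<1}) = b' ` ({-1,1} \<times> {-1<..<1})"
    using fbh[OF Lo_sq] m(2) by simp
  show "f ` b ` ({-1..1} \<times> {-1,1}) = b' ` ({-1..1} \<times> {-1,1})"
    using fbh[OF T_sq] m(1) by simp
qed

lemma sends_alt: "sends f D D' \<longleftrightarrow> img f (circles D) = circles D' \<and> img f (BI D) = BI D'"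
  by (simp add: sends_def img_def BI_def image_image)

lemma UN_match:
  assumes m1: "\<And>b. b \<in> B \<Longrightarrow> \<exists>b'\<in>B'. P b b'" and m2: "\<And>b'. b' \<in> B' \<Longrightarrow> \<exists>b\<in>B. P b b'"
    and e: "\<And>b b'. b \<in> B \<Longrightarrow> b' \<in> B' \<Longrightarrow> P b b' \<Longrightarrow> F b = G b'"
  shows "(\<Union>b\<in>B. F b) = (\<Union>b'\<in>B'. G b')"
proof (rule Set.set_eqI)
  fix p
  show "p \<in> (\<Union>b\<in>B. F b) \<longleftrightarrow> p \<in> (\<Union>b'\<in>B'. G b')"
  proof
    assume "p \<in> (\<Union>b\<in>B. F b)"
    then obtain b where b: "b \<in> B" "p \<in> F b" by blast
    obtain b' where "b' \<in> B'" "P b b'" using m1[OF b(1)] by blast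
    then show "p \<in> (\<Union>b'\<in>B'. G b')" using e b by blast
  next
    assume "p \<in> (\<Union>b'\<in>B'. G b')"
    then obtain b' where b': "b' \<in> B'" "p \<in> G b'" by blast
    obtain b where "b \<in> B" "P b b'" using m2[OF b'(1)] by blast
    then show "p \<in> (\<Union>b\<in>B. F b)" using e b' by blast
  qed
qed

lemma KL:
  assumes D: "wv D" and D': "wv D'" and f: "homeomorphic_map (nsphere 2) (nsphere 2) f"
    and s: "sends f D D'"
  shows "f ` surg D = surg D'"
proof -
  note fS = homeo_S2[OF f]
  have ci: "img f (circles D) = circles D'" and bi: "img f (BI D) = BI D'" using s sends_alt by auto
  have fU: "f ` \<Union>(circles D) = \<Union>(circles D')"
    using ci by (simp add: img_def image_Union)
  have m1: "\<exists>b'\<in>bands D'. f ` b ` sq = b' ` sq" if b: "b \<in> bands D" for b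
  proof -
    have "f ` b ` sq \<in> img f (BI D)" using b by (simp add: img_def BI_def)
    then show ?thesis using bi by (auto simp: BI_def)
  qed
  have m2: "\<exists>b\<in>bands D. f ` b ` sq = b' ` sq" if b': "b' \<in> bands D'" for b'
  proof -
    have "b' ` sq \<in> img f (BI D)" using b' bi by (simp add: BI_def)
    then obtain b where "b \<in> bands D" "b' ` sq = f ` b ` sq" by (auto simp: BI_def img_def)
    then show ?thesis by metis
  qed
  have e1: "f ` (\<Union>b\<in>bands D. b ` ({-1,1} \<times> {-1<..<1})) = (\<Union>b\<in>bands D'. b ` ({-1,1} \<times> {-1<..<1}))"
    unfolding image_UN
    by (rule UN_match[where P="\<lambda>b b'. f ` b ` sq = b' ` sq"])
       (use m1 m2 band_pair(1)[OF D D' f fU] in auto)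
  have e2: "f ` (\<Union>b\<in>bands D. b ` ({-1..1} \<times> {-1,1})) = (\<Union>b\<in>bands D'. b ` ({-1..1} \<times> {-1,1}))"
    unfolding image_UN
    by (rule UN_match[where P="\<lambda>b b'. f ` b ` sq = b' ` sq"])
       (use m1 m2 band_pair(2)[OF D D' f fU] in auto)
  have US: "\<Union>(circles D) \<subseteq> S2" using wvD(1)[OF D] by (rule Union_least)
  have LS: "(\<Union>b\<in>bands D. b ` ({-1,1} \<times> {-1<..<1})) \<subseteq> S2"
  proof (rule UN_least)
    fix b assume "b \<in> bands D"
    then show "b ` ({-1,1} \<times> {-1<..<1}) \<subseteq> S2"
      using order_trans[OF image_mono[OF Lo_sq] band_props(3)[OF wvD(2)[OF D]]] by blast
  qed
  have "f ` surg D = f ` (\<Union>(circles D) - (\<Union>b\<in>bands D. b ` ({-1,1} \<times> {-1<..<1})))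
      \<union> f ` (\<Union>b\<in>bands D. b ` ({-1..1} \<times> {-1,1}))"
    unfolding surg_def by (rule image_Un)
  also have "f ` (\<Union>(circles D) - (\<Union>b\<in>bands D. b ` ({-1,1} \<times> {-1<..<1})))
     = f ` \<Union>(circles D) - f ` (\<Union>b\<in>bands D. b ` ({-1,1} \<times> {-1<..<1}))"
    by (rule inj_on_image_set_diff[OF fS(2)]) (use US LS in auto)
  finally show ?thesis unfolding fU e1 e2 surg_def .
qed

lemma ending_sends:
  assumes D: "wv D" and D': "wv D'" and f: "homeomorphic_map (nsphere 2) (nsphere 2) f"
    and s: "sends f D D'"
  shows "img f (ending D) = ending D'"
  unfolding ending_def KL[OF assms, symmetric] using HC[OF f surg_sub[OF D]] by simp

lemma img_id[simp]: "img id A = A"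
  by (simp add: img_def)

lemma img_cancel:
  assumes "\<And>x. x \<in> S2 \<Longrightarrow> g (f x) = x" and "A \<subseteq> Pow S2"
  shows "img g (img f A) = A"
proof -
  have "g ` f ` c = c" if "c \<in> A" for c
  proof -
    have "c \<subseteq> S2" using assms(2) that by blast
    then have "(\<lambda>x. g (f x)) ` c = id ` c" using assms(1) by (intro image_cong) auto
    then show ?thesis by (simp add: image_image)
  qed
  then show ?thesis by (simp add: img_def image_image)
qed

lemma img_Pow: assumes "f ` S2 \<subseteq> S2" "A \<subseteq> Pow S2" shows "img f A \<subseteq> Pow S2"
  using assms unfolding img_def by blast

lemma img_mono: "A \<subseteq> B \<Longrightarrow> img f A \<subseteq> img f B"
  unfolding img_def by (rule image_mono)

lemma img_diff:
  assumes "inj_on f S2" "A \<subseteq> Pow S2" "B \<subseteq> Pow S2"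
  shows "img f (A - B) = img f A - img f B"
  unfolding img_def using assms by (intro inj_on_image_set_diff[OF inj_on_image_Pow]) auto

lemma img_mem:
  assumes "inj_on f S2" "x \<subseteq> S2" "A \<subseteq> Pow S2"
  shows "f ` x \<in> img f A \<longleftrightarrow> x \<in> A"
proof -
  have "inj_on (image f) (Pow S2)" using assms(1) by (rule inj_on_image_Pow)
  then show ?thesis using assms unfolding img_def by (auto simp: inj_on_eq_iff)
qed

lemma oph_S2:
  assumes "oph f"
  shows "f ` S2 = S2" "inj_on f S2" "\<And>x. x \<in> S2 \<Longrightarrow> inv_into S2 f (f x) = x"
    "\<And>x. x \<in> S2 \<Longrightarrow> f (inv_into S2 f x) = x"
proof -
  note h = homeo_S2[OF oph_homeo[OF assms]]
  show "f ` S2 = S2" "inj_on f S2" by (fact h(1), fact h(2))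
  show "\<And>x. x \<in> S2 \<Longrightarrow> inv_into S2 f (f x) = x" using h(2) by (rule inv_into_f_f)
  show "\<And>x. x \<in> S2 \<Longrightarrow> f (inv_into S2 f x) = x" using h(1) by (simp add: f_inv_into_f)
qed

lemma sends_comp: "sends f D1 D2 \<Longrightarrow> sends g D2 D3 \<Longrightarrow> sends (g \<circ> f) D1 D3"
  by (simp add: sends_alt img_img[symmetric])

lemma sends_id: "sends id D D"
  by (simp add: sends_alt)

lemma sends_inv:
  assumes f: "oph f" and c: "circles D \<subseteq> Pow S2" and bi: "BI D \<subseteq> Pow S2" and s: "sends f D D'"
  shows "sends (inv_into S2 f) D' D"
proof -
  have e: "img f (circles D) = circles D'" "img f (BI D) = BI D'" using s by (auto simp: sends_alt)
  show ?thesis unfolding sends_alt e[symmetric]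
    using img_cancel[of "inv_into S2 f" f, OF oph_S2(3)[OF f] c] img_cancel[of "inv_into S2 f" f, OF oph_S2(3)[OF f] bi] by simp
qed

lemma wv_Pow: assumes "wv D" shows "circles D \<subseteq> Pow S2" "BI D \<subseteq> Pow S2" "ending D \<subseteq> Pow S2"
proof -
  show "circles D \<subseteq> Pow S2" using wvD(1)[OF assms] by blast
  show "BI D \<subseteq> Pow S2" unfolding BI_def using band_props(3)[OF wvD(2)[OF assms]] by blast
  show "ending D \<subseteq> Pow S2" using ending_sub[OF assms] by blast
qed

lemma mir_S2_sub: "mir ` S2 \<subseteq> S2" using mir_S2 by simp

lemma valid_facts:
  assumes V: "valid_conf C"
  shows "wv C" "wv (md C)" "circles (md C) = img mir (ending C)" "ending (md C) = img mir (circles C)"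
    "md (md C) = C" "circles C \<subseteq> Pow S2" "ending C \<subseteq> Pow S2" "BI C \<subseteq> Pow S2"
    "circles (md C) \<subseteq> Pow S2" "ending (md C) \<subseteq> Pow S2" "BI (md C) \<subseteq> Pow S2"
proof -
  show W: "wv C" by (rule wv_valid[OF V])
  show W': "wv (md C)" by (rule wv_md[OF W])
  show "circles (md C) = img mir (ending C)" by (rule circles_md)
  show "ending (md C) = img mir (circles C)" by (rule ending_md[OF V])
  show "md (md C) = C" by (rule md_md[OF V])
  show "circles C \<subseteq> Pow S2" "ending C \<subseteq> Pow S2" "BI C \<subseteq> Pow S2" using wv_Pow[OF W] by auto
  show "circles (md C) \<subseteq> Pow S2" "ending (md C) \<subseteq> Pow S2" "BI (md C) \<subseteq> Pow S2" using wv_Pow[OF W'] by auto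
qed

lemma img_mir_conj: "img (mir \<circ> f \<circ> mir) X = img mir (img f (img mir X))"
  by (simp add: img_img comp_assoc)

lemma nat_md:
  assumes V: "valid_conf C" and N: "\<And>f. oph f \<Longrightarrow> sends f C C \<Longrightarrow> natural f C F F"
    and f: "oph f" and s: "sends f (md C) (md C)"
  shows "natural f (md C) (dualmap C F) (dualmap C F)"
proof -
  note vf = valid_facts[OF V]
  define g where "g = mir \<circ> f \<circ> mir"
  have og: "oph g" unfolding g_def by (rule oph_conj[OF f])
  have fE: "img f (ending (md C)) = ending (md C)"
    by (rule ending_sends[OF vf(2) vf(2) oph_homeo[OF f] s])
  have fB: "img f (BI (md C)) = BI (md C)" using s by (simp add: sends_alt)
  have fEc: "img f (img mir (circles C)) = img mir (circles C)" using fE vf(4) by simp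
  have sg: "sends g C C"
    unfolding sends_alt g_def img_mir_conj
    using fEc fB by (simp add: BI_md)
  note Ng = N[OF og sg]
  note fS = oph_S2[OF f]
  have mP: "img mir (circles C) \<subseteq> Pow S2" "img mir (ending C) \<subseteq> Pow S2"
    using vf(9) vf(10) vf(3) vf(4) by auto
  show ?thesis unfolding natural_def
  proof (intro allI impI)
    fix A' B' assume A': "A' \<subseteq> circles (md C)" and B': "B' \<subseteq> ending (md C)"
    have A'': "A' \<subseteq> img mir (ending C)" using A' vf(3) by simp
    have B'': "B' \<subseteq> img mir (circles C)" using B' vf(4) by simp
    have fEe: "img f (img mir (ending C)) = img mir (ending C)"
    proof -
      have "img f (circles (md C)) = circles (md C)" using s by (simp add: sends_alt)
      then show ?thesis using vf(3) by simp
    qed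
    define A where "A = circles C - img mir B'"
    define B where "B = ending C - img mir A'"
    have gA: "img g A = circles C - img mir (img f B')"
    proof -
      have "img mir A = img mir (circles C) - B'" unfolding A_def img_mir_diff by simp
      then have "img f (img mir A) = img f (img mir (circles C)) - img f B'"
        using img_diff[OF fS(2) mP(1)] B'' mP(1) by (metis subset_trans)
      then show ?thesis unfolding g_def img_mir_conj by (simp add: img_mir_diff fEc)
    qed
    have gB: "img g B = ending C - img mir (img f A')"
    proof -
      have "img mir B = img mir (ending C) - A'" unfolding B_def img_mir_diff by simp
      then have "img f (img mir B) = img f (img mir (ending C)) - img f A'"
        using img_diff[OF fS(2) mP(2)] A'' mP(2) by (metis subset_trans)
      then show ?thesis unfolding g_def img_mir_conj by (simp add: img_mir_diff fEe)
    qed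
    have "F (img g A) (img g B) = F A B" using Ng unfolding natural_def A_def B_def by blast
    then have "F (circles C - img mir (img f B')) (ending C - img mir (img f A')) = F A B"
      unfolding gA gB .
    then show "dualmap C F (img f A') (img f B') = dualmap C F A' B'"
      unfolding dualmap_def A_def B_def .
  qed
qed

lemma filt_dual:
  assumes V: "valid_conf C" and FC: "filtration C F"
  shows "filtration (md C) (dualmap C F)"
  unfolding filtration_def
proof (intro allI impI ballI)
  note vf = valid_facts[OF V]
  fix P A' B' x y
  assume P1: "P \<in> \<Union>(circles (md C))" and P2: "P \<in> \<Union>(ending (md C))"
    and A': "A' \<subseteq> circles (md C)" and B': "B' \<subseteq> ending (md C)"
    and d: "dualmap C F A' B'" and x: "x \<in> A'" and Px: "P \<in> x" and y: "y \<in> ending (md C)" and Py: "P \<in> y"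
  show "y \<in> B'"
  proof (rule ccontr)
    assume ny: "y \<notin> B'"
    have my: "mir ` y \<in> circles C" using y vf(4) img_mir_mem[of y "circles C"]
      by (metis img_mir_mir image_mir_mir img_mir_mem)
    have my2: "mir ` y \<notin> img mir B'" using ny img_mir_mem[of y B'] by simp
    have mx: "mir ` x \<in> ending C"
      using A' x vf(3) img_mir_mem[of "mir ` x" "ending C"]
      by (metis img_mir_mir image_mir_mir img_mir_mem subsetD)
    have mx2: "mir ` x \<in> img mir A'" using x img_mir_mem by simp
    define A where "A = circles C - img mir B'"
    define B where "B = ending C - img mir A'"
    have h5: "F A B" using d by (simp add: dualmap_def A_def B_def)
    have h1: "mir P \<in> \<Union>(circles C)" using my Py by blast
    have h2: "mir P \<in> \<Union>(ending C)" using mx Px by blast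
    have h3: "A \<subseteq> circles C" and h4: "B \<subseteq> ending C" by (auto simp: A_def B_def)
    note key = FC[unfolded filtration_def, rule_format, OF h1 h2 h3 h4 h5]
    have "mir ` y \<in> A" using my my2 by (simp add: A_def)
    moreover have "mir P \<in> mir ` y" using Py by simp
    moreover have "mir P \<in> mir ` x" using Px by simp
    ultimately have "mir ` x \<in> B" using key mx by blast
    then show False using mx2 by (simp add: B_def)
  qed
qed

lemma filt_transport:
  assumes D: "wv D" and D': "wv D'" and f: "oph f" and s: "sends f D' D" and FD: "filtration D Phi"
  shows "filtration D' (transport f Phi)"
  unfolding filtration_def transport_def
proof (intro allI impI ballI)
  fix P A B x y
  assume P1: "P \<in> \<Union>(circles D')" and P2: "P \<in> \<Union>(ending D')"
    and A: "A \<subseteq> circles D'" and B: "B \<subseteq> ending D'"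
    and d: "Phi (img f A) (img f B)" and x: "x \<in> A" and Px: "P \<in> x" and y: "y \<in> ending D'" and Py: "P \<in> y"
  note fS = oph_S2[OF f]
  have ci: "img f (circles D') = circles D" using s by (simp add: sends_alt)
  have ei: "img f (ending D') = ending D" by (rule ending_sends[OF D' D oph_homeo[OF f] s])
  have fx: "f ` x \<in> img f A" using x by (simp add: img_def)
  have fy: "f ` y \<in> ending D" using y ei by (auto simp: img_def)
  have h3: "img f A \<subseteq> circles D" using img_mono[OF A, of f] ci by simp
  have h4: "img f B \<subseteq> ending D" using img_mono[OF B, of f] ei by simp
  have h1: "f P \<in> \<Union>(circles D)" using fx Px h3 by blast
  have h2: "f P \<in> \<Union>(ending D)" using fy Py by blast
  note key = FD[unfolded filtration_def, rule_format, OF h1 h2 h3 h4 d]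
  have "f P \<in> f ` x" "f P \<in> f ` y" using Px Py by auto
  then have "f ` y \<in> img f B" using key fx fy by blast
  moreover have "y \<subseteq> S2" using ending_sub[OF D' y] .
  moreover have "B \<subseteq> Pow S2" using B wv_Pow(3)[OF D'] by blast
  ultimately show "y \<in> B" using img_mem[OF fS(2)] by blast
qed

lemma dual1: "duality C F (dualmap C F)"
  unfolding duality_def dualmap_def by (auto simp: double_diff)

lemma dual2: assumes V: "valid_conf C" shows "duality (md C) (dualmap C F) F"
  unfolding duality_def dualmap_def
proof (intro allI impI)
  note vf = valid_facts[OF V]
  fix A' B' assume A': "A' \<subseteq> circles (md C)" and B': "B' \<subseteq> ending (md C)"
  have "img mir (ending (md C) - B') = circles C - img mir B'"
    unfolding vf(4) img_mir_diff by simp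
  moreover have "img mir (circles (md C) - A') = ending C - img mir A'"
    unfolding vf(3) img_mir_diff by simp
  ultimately show "F (circles C - img mir B') (ending C - img mir A') =
       F (img mir (ending (md C) - B')) (img mir (circles (md C) - A'))" by simp
qed

lemma filt_xor:
  assumes "filtration C F" "filtration C G"
  shows "filtration C (\<lambda>A B. F A B \<noteq> G A B)"
  unfolding filtration_def
proof (intro allI impI)
  fix P A B
  assume h1: "P \<in> \<Union>(circles C)" and h2: "P \<in> \<Union>(ending C)" and h3: "A \<subseteq> circles C"
    and h4: "B \<subseteq> ending C" and h5: "F A B \<noteq> G A B"
  then have "F A B \<or> G A B" by blast
  then show "\<forall>x\<in>A. P \<in> x \<longrightarrow> (\<forall>y\<in>ending C. P \<in> y \<longrightarrow> y \<in> B)"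
  proof
    assume "F A B"
    then show ?thesis using assms(1)[unfolded filtration_def, rule_format, OF h1 h2 h3 h4] by blast
  next
    assume "G A B"
    then show ?thesis using assms(2)[unfolded filtration_def, rule_format, OF h1 h2 h3 h4] by blast
  qed
qed

lemma part1:
  assumes V: "valid_conf C" and FC: "filtration C F"
    and N: "\<And>f. oph f \<Longrightarrow> sends f C C \<Longrightarrow> natural f C F F"
    and nex: "\<nexists>psi. oph psi \<and> sends psi C (md C)"
  shows "rules {C, md C} (\<lambda>D. if D = C then F else dualmap C F)"
proof -
  note vf = valid_facts[OF V]
  have ne: "md C \<noteq> C"
  proof
    assume "md C = C"
    then have "sends id C (md C)" using sends_id by simp
    then show False using nex oph_id by blast
  qed
  define Fam where "Fam = (\<lambda>D. if D = C then F else dualmap C F)"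
  have FamC: "Fam C = F" and FamM: "Fam (md C) = dualmap C F" using ne by (auto simp: Fam_def)
  have R1: "filtration D (Fam D)" if "D \<in> {C, md C}" for D
  proof -
    from that have "D = C \<or> D = md C" by simp
    then show ?thesis
    proof
      assume "D = C" then show ?thesis using FC FamC by simp
    next
      assume "D = md C" then show ?thesis using filt_dual[OF V FC] FamM by simp
    qed
  qed
  have R2: "duality D (Fam D) (Fam (md D))" if "D \<in> {C, md C}" for D
  proof -
    from that have "D = C \<or> D = md C" by simp
    then show ?thesis
    proof
      assume "D = C" then show ?thesis using dual1[of C F] FamC FamM by simp
    next
      assume "D = md C" then show ?thesis using dual2[OF V, of F] FamC FamM vf(5) by simp
    qed
  qed
  have R3: "natural f D (Fam D) (Fam D')" if D: "D \<in> {C, md C}" and D': "D' \<in> {C, md C}"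
    and f: "oph f" and s: "sends f D D'" for D D' f
  proof -
    from D have "D = C \<or> D = md C" by simp
    moreover from D' have "D' = C \<or> D' = md C" by simp
    ultimately consider "D = C" "D' = C" | "D = C" "D' = md C" | "D = md C" "D' = C" | "D = md C" "D' = md C"
      by blast
    then show ?thesis
    proof cases
      case 1 then show ?thesis using N f s FamC by simp
    next
      case 2 then show ?thesis using nex f s by blast
    next
      case 3
      then have "sends (inv_into S2 f) C (md C)" using sends_inv[OF f vf(9) vf(11)] s by simp
      then show ?thesis using nex oph_inv[OF f] by blast
    next
      case 4 then show ?thesis using nat_md[OF V N f] s FamM by simp
    qed
  qed
  show ?thesis unfolding Fam_def[symmetric] rules_def
    using R1 R2 R3 by blast
qed

lemma part2:
  assumes V: "valid_conf C" and FC: "filtration C F"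
    and N: "\<And>f. oph f \<Longrightarrow> sends f C C \<Longrightarrow> natural f C F F"
    and p: "oph psi" and sp: "sends psi C (md C)"
  shows "rules {C, md C} (\<lambda>D. if D = C then Ftilde C F psi
                                   else transport (inv_into S2 psi) (Ftilde C F psi))"
proof -
  note vf = valid_facts[OF V]
  define G where "G = Fprime C F psi"
  define Ft where "Ft = Ftilde C F psi"
  define pi where "pi = inv_into S2 psi"
  define Z where "Z = (\<exists>A B. A \<subseteq> circles C \<and> B \<subseteq> ending C \<and> F A B \<noteq> G A B)"
  have Ft_eq: "Ft = (if Z then (\<lambda>A B. F A B \<noteq> G A B) else F)"
    unfolding Ft_def Ftilde_def Z_def G_def by (rule refl)
  have G_eq: "G A B = dualmap C F (img psi A) (img psi B)" for A B
    by (simp add: G_def Fprime_def transport_def)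
  note pS = oph_S2[OF p]
  have opi: "oph pi" unfolding pi_def by (rule oph_inv[OF p])
  have spi: "sends pi (md C) C" unfolding pi_def by (rule sends_inv[OF p vf(6) vf(8) sp])
  have pC: "img psi (circles C) = img mir (ending C)" using sp vf(3) by (simp add: sends_alt)
  have pE: "img psi (ending C) = img mir (circles C)"
    using ending_sends[OF vf(1) vf(2) oph_homeo[OF p] sp] vf(4) by simp
  have pB: "img psi (BI C) = img mir (BI C)" using sp BI_md by (simp add: sends_alt)
  have cpi: "img pi (img psi X) = X" if "X \<subseteq> Pow S2" for X
    unfolding pi_def by (rule img_cancel[of "inv_into S2 psi" psi, OF pS(3) that])
  have cpsi: "img psi (img pi X) = X" if "X \<subseteq> Pow S2" for X
    unfolding pi_def by (rule img_cancel[of psi "inv_into S2 psi", OF pS(4) that])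
  have PC: "circles C \<subseteq> Pow S2" and PE: "ending C \<subseteq> Pow S2" using vf by auto
  have PmE: "img mir (ending C) \<subseteq> Pow S2" and PmC: "img mir (circles C) \<subseteq> Pow S2"
    using vf(9) vf(10) vf(3) vf(4) by auto
  have G_nat: "G (img f A) (img f B) = G A B"
    if f: "oph f" and sf: "sends f C C" and A: "A \<subseteq> circles C" and B: "B \<subseteq> ending C" for f A B
  proof -
    define f' where "f' = psi \<circ> (f \<circ> pi)"
    have of': "oph f'" unfolding f'_def by (intro oph_comp opi f p)
    have sf': "sends f' (md C) (md C)" unfolding f'_def
      by (rule sends_comp[OF sends_comp[OF spi sf] sp])
    have natf: "natural f' (md C) (dualmap C F) (dualmap C F)"
      by (rule nat_md[OF V N of' sf'])
    have nat: "dualmap C F (img f' X') (img f' Y') = dualmap C F X' Y'"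
      if "X' \<subseteq> circles (md C)" "Y' \<subseteq> ending (md C)" for X' Y'
      using natf that unfolding natural_def by blast
    have X: "img psi A \<subseteq> circles (md C)" using img_mono[OF A, of psi] pC vf(3) by simp
    have Y: "img psi B \<subseteq> ending (md C)" using img_mono[OF B, of psi] pE vf(4) by simp
    have AP: "A \<subseteq> Pow S2" using A PC by blast
    have BP: "B \<subseteq> Pow S2" using B PE by blast
    have eA: "img f' (img psi A) = img psi (img f A)"
      unfolding f'_def img_img[symmetric] using cpi[OF AP] by simp
    have eB: "img f' (img psi B) = img psi (img f B)"
      unfolding f'_def img_img[symmetric] using cpi[OF BP] by simp
    show ?thesis unfolding G_eq using nat[OF X Y] unfolding eA eB .
  qed
  have Ft_nat: "Ft (img f A) (img f B) = Ft A B"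
    if f: "oph f" and sf: "sends f C C" and A: "A \<subseteq> circles C" and B: "B \<subseteq> ending C" for f A B
  proof -
    have "F (img f A) (img f B) = F A B" using N[OF f sf] A B unfolding natural_def by blast
    moreover have "G (img f A) (img f B) = G A B" by (rule G_nat[OF f sf A B])
    ultimately show ?thesis unfolding Ft_eq by simp
  qed
  define h where "h = mir \<circ> psi \<circ> mir \<circ> psi"
  have oh: "oph h" unfolding h_def using oph_comp[OF p oph_conj[OF p]] by (simp add: comp_assoc)
  have imh: "img h X = img mir (img psi (img mir (img psi X)))" for X
    unfolding h_def by (simp add: img_img comp_assoc)
  have sh: "sends h C C"
    unfolding sends_alt imh using pC pE pB by simp
  have Nhn: "natural h C F F" by (rule N[OF oh sh])
  have Nh: "F (img h X') (img h Y') = F X' Y'" if "X' \<subseteq> circles C" "Y' \<subseteq> ending C" for X' Y'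
    using Nhn that unfolding natural_def by blast
  have sig: "img pi (img mir (ending C - B)) \<subseteq> circles C \<and> img pi (img mir (circles C - A)) \<subseteq> ending C
     \<and> Ft (img pi (img mir (ending C - B))) (img pi (img mir (circles C - A))) = Ft A B"
    if A: "A \<subseteq> circles C" and B: "B \<subseteq> ending C" for A B
  proof -
    define A1 where "A1 = img pi (img mir (ending C - B))"
    define B1 where "B1 = img pi (img mir (circles C - A))"
    have mEB: "img mir (ending C - B) \<subseteq> Pow S2" using PmE img_mono[of "ending C - B" "ending C" mir] by blast
    have mCA: "img mir (circles C - A) \<subseteq> Pow S2" using PmC img_mono[of "circles C - A" "circles C" mir] by blast
    have A1s: "A1 \<subseteq> circles C"
    proof -
      have "A1 \<subseteq> img pi (img mir (ending C))" unfolding A1_def by (intro img_mono) auto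
      also have "\<dots> = circles C" using pC cpi[OF PC] by metis
      finally show ?thesis .
    qed
    have B1s: "B1 \<subseteq> ending C"
    proof -
      have "B1 \<subseteq> img pi (img mir (circles C))" unfolding B1_def by (intro img_mono) auto
      also have "\<dots> = ending C" using pE cpi[OF PE] by metis
      finally show ?thesis .
    qed
    have pA1: "img psi A1 = img mir (ending C - B)" unfolding A1_def by (rule cpsi[OF mEB])
    have pB1: "img psi B1 = img mir (circles C - A)" unfolding B1_def by (rule cpsi[OF mCA])
    have GA1: "G A1 B1 = F A B"
      unfolding G_eq pA1 pB1 dualmap_def using A B by (simp add: double_diff)
    have BP: "B \<subseteq> Pow S2" using B PE by blast
    have AP: "A \<subseteq> Pow S2" using A PC by blast
    have hA1: "img h A1 = circles C - img mir (img psi B)"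
    proof -
      have "img h A1 = img mir (img psi (ending C - B))"
        unfolding imh pA1 by simp
      also have "\<dots> = img mir (img psi (ending C) - img psi B)"
        using img_diff[OF pS(2) PE BP] by simp
      also have "\<dots> = circles C - img mir (img psi B)" unfolding pE img_mir_diff by simp
      finally show ?thesis .
    qed
    have hB1: "img h B1 = ending C - img mir (img psi A)"
    proof -
      have "img h B1 = img mir (img psi (circles C - A))"
        unfolding imh pB1 by simp
      also have "\<dots> = img mir (img psi (circles C) - img psi A)"
        using img_diff[OF pS(2) PC AP] by simp
      also have "\<dots> = ending C - img mir (img psi A)" unfolding pC img_mir_diff by simp
      finally show ?thesis .
    qed
    have FA1: "F A1 B1 = G A B"
    proof -
      have "F A1 B1 = F (img h A1) (img h B1)" using Nh[OF A1s B1s] by simp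
      also have "\<dots> = G A B" unfolding hA1 hB1 G_eq dualmap_def ..
      finally show ?thesis .
    qed
    have "Ft A1 B1 = Ft A B"
    proof (cases Z)
      case True then show ?thesis unfolding Ft_eq using GA1 FA1 by auto
    next
      case False
      then have "F A B = G A B" using A B unfolding Z_def by blast
      then show ?thesis unfolding Ft_eq using False GA1 FA1 by simp
    qed
    then show ?thesis using A1s B1s unfolding A1_def B1_def by blast
  qed
  have filtG: "filtration C G"
    unfolding G_def Fprime_def by (rule filt_transport[OF vf(2) vf(1) p sp filt_dual[OF V FC]])
  have filtFt: "filtration C Ft"
    unfolding Ft_eq using filt_xor[OF FC filtG] FC by simp
  show ?thesis
    unfolding Ft_def[symmetric] pi_def[symmetric]
  proof (cases "md C = C")
    case True
    have K: "{C, md C} = {C}" using True by simp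
    have spC: "sends psi C C" using sp True by simp
    have spiC: "sends pi C C" using spi True by simp
    have cm: "circles C = img mir (ending C)" and em: "ending C = img mir (circles C)"
      using vf(3) vf(4) True by auto
    have dC: "duality C Ft Ft"
      unfolding duality_def
    proof (intro allI impI)
      fix A B assume A: "A \<subseteq> circles C" and B: "B \<subseteq> ending C"
      have As: "img mir (ending C - B) \<subseteq> circles C" using cm img_mono[of "ending C - B" "ending C" mir] by auto
      have Bs: "img mir (circles C - A) \<subseteq> ending C" using em img_mono[of "circles C - A" "circles C" mir] by auto
      have "Ft A B = Ft (img pi (img mir (ending C - B))) (img pi (img mir (circles C - A)))"
        using sig[OF A B] by simp
      also have "\<dots> = Ft (img mir (ending C - B)) (img mir (circles C - A))"
        by (rule Ft_nat[OF opi spiC As Bs])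
      finally show "Ft A B = Ft (img mir (ending C - B)) (img mir (circles C - A))" .
    qed
    show "rules {C, md C} (\<lambda>D. if D = C then Ft else transport pi Ft)"
      unfolding K rules_def using filtFt dC True Ft_nat unfolding natural_def by auto
  next
    case ne: False
    define H where "H = transport pi Ft"
    define Fam where "Fam = (\<lambda>D. if D = C then Ft else H)"
    have FamC: "Fam C = Ft" and FamM: "Fam (md C) = H" using ne by (auto simp: Fam_def)
    have H_eq: "H A B = Ft (img pi A) (img pi B)" for A B by (simp add: H_def transport_def)
    have filtH: "filtration (md C) H"
      unfolding H_def by (rule filt_transport[OF vf(1) vf(2) opi spi filtFt])
    have d1: "duality C Ft H"
      unfolding duality_def H_eq using sig by simp
    have d2: "duality (md C) H Ft"
      unfolding duality_def
    proof (intro allI impI)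
      fix A' B' assume A': "A' \<subseteq> circles (md C)" and B': "B' \<subseteq> ending (md C)"
      define X where "X = circles C - img mir B'"
      define Y where "Y = ending C - img mir A'"
      have X: "X \<subseteq> circles C" and Y: "Y \<subseteq> ending C" by (auto simp: X_def Y_def)
      have mA': "img mir A' \<subseteq> ending C" using img_mono[OF A', of mir] vf(3) by simp
      have mB': "img mir B' \<subseteq> circles C" using img_mono[OF B', of mir] vf(4) by simp
      have e1: "img mir (ending C - Y) = A'" unfolding Y_def using mA' by (simp add: double_diff)
      have e2: "img mir (circles C - X) = B'" unfolding X_def using mB' by (simp add: double_diff)
      have "Ft X Y = H A' B'" using sig[OF X Y] unfolding e1 e2 H_eq by simp
      moreover have "img mir (ending (md C) - B') = X" unfolding X_def vf(4) img_mir_diff by simp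
      moreover have "img mir (circles (md C) - A') = Y" unfolding Y_def vf(3) img_mir_diff by simp
      ultimately show "H A' B' = Ft (img mir (ending (md C) - B')) (img mir (circles (md C) - A'))"
        by simp
    qed
    have PCm: "A \<subseteq> circles (md C) \<Longrightarrow> A \<subseteq> Pow S2" for A using vf(9) by blast
    have PEm: "B \<subseteq> ending (md C) \<Longrightarrow> B \<subseteq> Pow S2" for B using vf(10) by blast
    have nat: "natural f D (Fam D) (Fam D')" if D: "D \<in> {C, md C}" and D': "D' \<in> {C, md C}"
      and f: "oph f" and s: "sends f D D'" for D D' f
    proof -
      from D have "D = C \<or> D = md C" by simp
      moreover from D' have "D' = C \<or> D' = md C" by simp
      ultimately consider "D = C" "D' = C" | "D = C" "D' = md C" | "D = md C" "D' = C" | "D = md C" "D' = md C"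
        by blast
      then show ?thesis
      proof cases
        case 1 then show ?thesis using Ft_nat[OF f] s FamC unfolding natural_def by simp
      next
        case 2
        have o: "oph (pi \<circ> f)" by (intro oph_comp f opi)
        have ss: "sends (pi \<circ> f) C C" using sends_comp[of f C "md C" pi C] s spi 2 by simp
        show ?thesis unfolding natural_def 2 FamC FamM H_eq img_img
          using Ft_nat[OF o ss] by simp
      next
        case 3
        have o: "oph (f \<circ> psi)" by (intro oph_comp f p)
        have ss: "sends (f \<circ> psi) C C" using sends_comp[of psi C "md C" f C] s sp 3 by simp
        show ?thesis unfolding natural_def 3 FamC FamM H_eq
        proof (intro allI impI)
          fix A' B' assume A': "A' \<subseteq> circles (md C)" and B': "B' \<subseteq> ending (md C)"
          have a1: "img pi A' \<subseteq> circles C" using img_mono[OF A', of pi] spi by (simp add: sends_alt)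
          have b1: "img pi B' \<subseteq> ending C"
            using img_mono[OF B', of pi] ending_sends[OF vf(2) vf(1) oph_homeo[OF opi] spi] by simp
          have "Ft (img (f \<circ> psi) (img pi A')) (img (f \<circ> psi) (img pi B')) = Ft (img pi A') (img pi B')"
            by (rule Ft_nat[OF o ss a1 b1])
          moreover have "img (f \<circ> psi) (img pi A') = img f A'"
            using cpsi[OF PCm[OF A']] by (simp add: img_img[symmetric])
          moreover have "img (f \<circ> psi) (img pi B') = img f B'"
            using cpsi[OF PEm[OF B']] by (simp add: img_img[symmetric])
          ultimately show "Ft (img f A') (img f B') = Ft (img pi A') (img pi B')" by simp
        qed
      next
        case 4
        have o: "oph (pi \<circ> (f \<circ> psi))" by (intro oph_comp f p opi)
        have ss: "sends (pi \<circ> (f \<circ> psi)) C C"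
          using sends_comp[OF sends_comp[OF sp, of f "md C"] spi] s 4 by simp
        show ?thesis unfolding natural_def 4 FamM H_eq
        proof (intro allI impI)
          fix A' B' assume A': "A' \<subseteq> circles (md C)" and B': "B' \<subseteq> ending (md C)"
          have a1: "img pi A' \<subseteq> circles C" using img_mono[OF A', of pi] spi by (simp add: sends_alt)
          have b1: "img pi B' \<subseteq> ending C"
            using img_mono[OF B', of pi] ending_sends[OF vf(2) vf(1) oph_homeo[OF opi] spi] by simp
          have "Ft (img (pi \<circ> (f \<circ> psi)) (img pi A')) (img (pi \<circ> (f \<circ> psi)) (img pi B')) = Ft (img pi A') (img pi B')"
            by (rule Ft_nat[OF o ss a1 b1])
          moreover have "img (pi \<circ> (f \<circ> psi)) (img pi A') = img pi (img f A')"
            using cpsi[OF PCm[OF A']] by (simp add: img_img[symmetric])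
          moreover have "img (pi \<circ> (f \<circ> psi)) (img pi B') = img pi (img f B')"
            using cpsi[OF PEm[OF B']] by (simp add: img_img[symmetric])
          ultimately show "Ft (img pi (img f A')) (img pi (img f B')) = Ft (img pi A') (img pi B')" by simp
        qed
      qed
    qed
    have R1: "filtration D (Fam D)" if "D \<in> {C, md C}" for D
      using that filtFt filtH FamC FamM by auto
    have R2: "duality D (Fam D) (Fam (md D))" if "D \<in> {C, md C}" for D
      using that d1 d2 FamC FamM vf(5) by auto
    show "rules {C, md C} (\<lambda>D. if D = C then Ft else transport pi Ft)"
      unfolding H_def[symmetric] Fam_def[symmetric] rules_def using R1 R2 nat by blast
  qed
qed

theorem lemma3p2:
  fixes C :: rconf and F :: coef
  assumes "valid_conf C"
    and "filtration C F"
    and "\<And>f. oph f \<Longrightarrow> sends f C C \<Longrightarrow> natural f C F F"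
  shows "((\<nexists>psi. oph psi \<and> sends psi C (md C)) \<longrightarrow>
            rules {C, md C} (\<lambda>D. if D = C then F else dualmap C F)) \<and>
         (\<forall>psi. oph psi \<and> sends psi C (md C) \<longrightarrow>
            rules {C, md C} (\<lambda>D. if D = C then Ftilde C F psi
                                   else transport (inv_into S2 psi) (Ftilde C F psi)))"
proof (intro conjI impI allI)
  assume nex: "\<nexists>psi. oph psi \<and> sends psi C (md C)"
  show "rules {C, md C} (\<lambda>D. if D = C then F else dualmap C F)"
  proof (rule part1)
    show "valid_conf C" by (fact assms(1))
    show "filtration C F" by (fact assms(2))
    show "\<And>f. oph f \<Longrightarrow> sends f C C \<Longrightarrow> natural f C F F" by (rule assms(3))
  qed (fact nex)
next
  fix psi assume h: "oph psi \<and> sends psi C (md C)"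
  show "rules {C, md C} (\<lambda>D. if D = C then Ftilde C F psi
                                   else transport (inv_into S2 psi) (Ftilde C F psi))"
  proof (rule part2)
    show "valid_conf C" by (fact assms(1))
    show "filtration C F" by (fact assms(2))
    show "\<And>f. oph f \<Longrightarrow> sends f C C \<Longrightarrow> natural f C F F" by (rule assms(3))
    show "oph psi" using h by simp
    show "sends psi C (md C)" using h by simp
  qed
qed

end
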